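(* Let $d$ be a positive integer and let $H$ be a bipartite graph in which all vertices in one part have degree at most $d$. Let $c>0$. Then there exists $C=C(c,H)>0$ such that for every $t$ and every $(c,t)$-sparse graph $\Gamma$ with $n$ vertices, any subgraph $G\subseteq\Gamma$ with at least $C t^{1/d} n^{2-1/d}$ edges contains a copy of $H$ which is an induced subgraph of $\Gamma$.
   Context: A graph $\Gamma$ is $(c,t)$-sparse if for every pair of (not necessarily disjoint) vertex subsets $A,B\subseteq V(\Gamma)$ with $|A|,|B|\ge t$ we have $e(A,B)\le (1-c)|A||B|$, where $e(A,B)$ is the number of ordered pairs $(a,b)\in A\times B$ such that $\{a,b\}$ is an edge of $\Gamma$. A copy of $H$ in $G$ is induced in $\Gamma$ if the vertex set of the copy induces in $\Gamma$ exactly the edges of the copy. *)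

theory Defs
  imports Complex_Main
begin

definition simple_graph :: "'a set \<Rightarrow> ('a \<Rightarrow> 'a \<Rightarrow> bool) \<Rightarrow> bool" where
  "simple_graph V E \<longleftrightarrow> finite V \<and> (\<forall>u v. E u v \<longrightarrow> u \<in> V \<and> v \<in> V)
     \<and> (\<forall>u v. E u v \<longrightarrow> E v u) \<and> (\<forall>u. \<not> E u u)"

definition subgraph :: "'a set \<Rightarrow> ('a \<Rightarrow> 'a \<Rightarrow> bool) \<Rightarrow> 'a set \<Rightarrow> ('a \<Rightarrow> 'a \<Rightarrow> bool) \<Rightarrow> bool" where
  "subgraph VG EG V E \<longleftrightarrow> simple_graph VG EG \<and> VG \<subseteq> V \<and> (\<forall>u v. EG u v \<longrightarrow> E u v)"

definition num_edges :: "'a set \<Rightarrow> ('a \<Rightarrow> 'a \<Rightarrow> bool) \<Rightarrow> nat" where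
  "num_edges V E = card {{u, v} | u v. u \<in> V \<and> v \<in> V \<and> E u v}"

definition e_pairs :: "('a \<Rightarrow> 'a \<Rightarrow> bool) \<Rightarrow> 'a set \<Rightarrow> 'a set \<Rightarrow> nat" where
  "e_pairs E A B = card {(a, b). a \<in> A \<and> b \<in> B \<and> E a b}"

definition sparse :: "real \<Rightarrow> real \<Rightarrow> 'a set \<Rightarrow> ('a \<Rightarrow> 'a \<Rightarrow> bool) \<Rightarrow> bool" where
  "sparse c t V E \<longleftrightarrow> (\<forall>A B. A \<subseteq> V \<longrightarrow> B \<subseteq> V \<longrightarrow> real (card A) \<ge> t \<longrightarrow> real (card B) \<ge> t
       \<longrightarrow> real (e_pairs E A B) \<le> (1 - c) * real (card A) * real (card B))"

definition degree :: "'a set \<Rightarrow> ('a \<Rightarrow> 'a \<Rightarrow> bool) \<Rightarrow> 'a \<Rightarrow> nat" where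
  "degree V E x = card {y \<in> V. E x y}"

definition bipartite_one_side_deg :: "'b set \<Rightarrow> ('b \<Rightarrow> 'b \<Rightarrow> bool) \<Rightarrow> nat \<Rightarrow> bool" where
  "bipartite_one_side_deg VH EH d \<longleftrightarrow> (\<exists>X Y. X \<union> Y = VH \<and> X \<inter> Y = {}
      \<and> (\<forall>u v. EH u v \<longrightarrow> (u \<in> X \<and> v \<in> Y) \<or> (u \<in> Y \<and> v \<in> X))
      \<and> (\<forall>x\<in>X. degree VH EH x \<le> d))"

definition induced_copy :: "'b set \<Rightarrow> ('b \<Rightarrow> 'b \<Rightarrow> bool) \<Rightarrow> 'a set \<Rightarrow> ('a \<Rightarrow> 'a \<Rightarrow> bool)
    \<Rightarrow> ('a \<Rightarrow> 'a \<Rightarrow> bool) \<Rightarrow> ('b \<Rightarrow> 'a) \<Rightarrow> bool" where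
  "induced_copy VH EH VG EG E phi \<longleftrightarrow> inj_on phi VH \<and> phi ` VH \<subseteq> VG
     \<and> (\<forall>x\<in>VH. \<forall>y\<in>VH. EH x y \<longrightarrow> EG (phi x) (phi y))
     \<and> (\<forall>x\<in>VH. \<forall>y\<in>VH. E (phi x) (phi y) \<longrightarrow> EH x y)"

end

theory Submission
  imports Defs "HOL-Library.FuncSet" "HOL-Analysis.Convex"
begin

lemma jensen_pow:
  fixes f :: "'i \<Rightarrow> real"
  assumes "finite A" "A \<noteq> {}" "\<forall>i\<in>A. f i \<ge> 0"
  shows "real (card A) * ((\<Sum>i\<in>A. f i) / card A) ^ k \<le> (\<Sum>i\<in>A. f i ^ k)"
proof -
  have cv: "convex_on {0..} (\<lambda>x::real. x ^ k)"
  proof (cases "even k")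
    case True
    then show ?thesis using convex_power_even convex_on_subset by blast
  next
    case False
    then show ?thesis using convex_power_odd by blast
  qed
  have N: "real (card A) > 0" using assms by auto
  have "(\<Sum>i\<in>A. (1 / card A) *\<^sub>R f i) ^ k \<le> (\<Sum>i\<in>A. (1 / card A) * f i ^ k)"
    by (rule convex_on_sum[OF assms(1,2) cv]) (use assms N in auto)
  then have "((\<Sum>i\<in>A. f i) / card A) ^ k \<le> (\<Sum>i\<in>A. f i ^ k) / card A"
    by (simp add: sum_distrib_left[symmetric] sum_divide_distrib[symmetric])
  then show ?thesis using N by (simp add: field_simps)
qed

lemma sum_card_swap:
  assumes "finite A" "finite B"
  shows "(\<Sum>a\<in>A. card {b\<in>B. R a b}) = (\<Sum>b\<in>B. card {a\<in>A. R a b})"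
proof -
  have "(\<Sum>a\<in>A. card {b\<in>B. R a b}) = (\<Sum>a\<in>A. \<Sum>b\<in>B. if R a b then 1 else 0)"
    using assms by (simp add: sum.inter_filter[symmetric])
  also have "\<dots> = (\<Sum>b\<in>B. \<Sum>a\<in>A. if R a b then 1 else 0)" by (rule sum.swap)
  also have "\<dots> = (\<Sum>b\<in>B. card {a\<in>A. R a b})"
    using assms by (simp add: sum.inter_filter[symmetric])
  finally show ?thesis .
qed

definition nb :: "('a \<Rightarrow> 'a \<Rightarrow> bool) \<Rightarrow> 'a \<Rightarrow> 'a set" where
  "nb E v = {w. E v w} \<union> {v}"

definition hiset :: "'a set \<Rightarrow> ('a \<Rightarrow> 'a \<Rightarrow> bool) \<Rightarrow> real \<Rightarrow> 'a set \<Rightarrow> 'a set" where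
  "hiset V E c W = {v\<in>V. real (card {w\<in>W. E v w}) > (1 - c) * real (card W)}"

lemma e_pairs_sum:
  assumes "finite B" "finite W"
  shows "e_pairs E B W = (\<Sum>v\<in>B. card {w\<in>W. E v w})"
proof -
  have "{(a, b). a \<in> B \<and> b \<in> W \<and> E a b} = Sigma B (\<lambda>v. {w\<in>W. E v w})" by auto
  then show ?thesis unfolding e_pairs_def using assms by (simp add: card_SigmaI)
qed

lemma hiset_small:
  assumes "finite V" "sparse c t V E" "W \<subseteq> V" "real (card W) \<ge> t" "t > 0"
  shows "real (card (hiset V E c W)) < t"
proof (rule ccontr)
  let ?B = "hiset V E c W"
  assume "\<not> ?thesis"
  then have Bt: "real (card ?B) \<ge> t" by simp
  have BV: "?B \<subseteq> V" unfolding hiset_def by auto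
  have fB: "finite ?B" "finite W" using assms BV finite_subset by auto
  have ne: "?B \<noteq> {}" using Bt assms(5) by auto
  have "real (e_pairs E ?B W) \<le> (1 - c) * real (card ?B) * real (card W)"
    using assms(2) BV assms(3) Bt assms(4) unfolding sparse_def by blast
  moreover have "real (e_pairs E ?B W) = (\<Sum>v\<in>?B. real (card {w\<in>W. E v w}))"
    using e_pairs_sum[OF fB] by simp
  moreover have "(\<Sum>v\<in>?B. (1 - c) * real (card W)) < (\<Sum>v\<in>?B. real (card {w\<in>W. E v w}))"
    by (rule sum_strict_mono) (use fB ne in \<open>auto simp: hiset_def\<close>)
  ultimately show False by (simp add: algebra_simps)
qed

lemma shrink:
  assumes "finite W" "v \<notin> hiset V E c W" "v \<in> V"
  shows "real (card (W - nb E v)) \<ge> c * real (card W) - 1"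
proof -
  have "W \<subseteq> (W - nb E v) \<union> {w\<in>W. E v w} \<union> {v}" unfolding nb_def by auto
  then have "card W \<le> card ((W - nb E v) \<union> {w\<in>W. E v w} \<union> {v})"
    by (intro card_mono) (use assms in auto)
  also have "\<dots> \<le> card (W - nb E v) + card {w\<in>W. E v w} + 1"
  proof -
    have "card ((W - nb E v) \<union> {w\<in>W. E v w} \<union> {v}) \<le> card ((W - nb E v) \<union> {w\<in>W. E v w}) + card {v}"
      by (rule card_Un_le)
    moreover have "card ((W - nb E v) \<union> {w\<in>W. E v w}) \<le> card (W - nb E v) + card {w\<in>W. E v w}"
      by (rule card_Un_le)
    ultimately show ?thesis by simp
  qed
  finally have "real (card W) \<le> real (card (W - nb E v)) + real (card {w\<in>W. E v w}) + 1" by linarith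
  moreover have "real (card {w\<in>W. E v w}) \<le> (1 - c) * real (card W)"
    using assms(2,3) unfolding hiset_def by auto
  ultimately show ?thesis by (simp add: algebra_simps)
qed

lemma rainbow:
  assumes "finite X" "c > 0"
  shows "\<exists>M>0. \<forall>(V::'a set) E t W. simple_graph V E \<longrightarrow> sparse c t V E \<longrightarrow> t \<ge> 1 \<longrightarrow>
     (\<forall>x\<in>X. W x \<subseteq> V \<and> real (card (W x)) \<ge> M * t) \<longrightarrow>
     (\<exists>p. (\<forall>x\<in>X. p x \<in> W x) \<and> inj_on p X \<and> (\<forall>x\<in>X. \<forall>x'\<in>X. \<not> E (p x) (p x')))"
  using assms(1)
proof (induction X rule: finite_induct)
  case empty
  show ?case by (rule exI[of _ 1]) auto
next
  case (insert x X)
  obtain M' where M'pos: "M' > 0" and M': "\<forall>(V::'a set) E t W. simple_graph V E \<longrightarrow> sparse c t V E \<longrightarrow> t \<ge> 1 \<longrightarrow>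
     (\<forall>x\<in>X. W x \<subseteq> V \<and> real (card (W x)) \<ge> M' * t) \<longrightarrow>
     (\<exists>p. (\<forall>x\<in>X. p x \<in> W x) \<and> inj_on p X \<and> (\<forall>x\<in>X. \<forall>x'\<in>X. \<not> E (p x) (p x')))"
    using insert.IH by blast
  define M where "M = max ((M' + 1) / c) (real (card X) + 1)"
  have Mpos: "M > 0" unfolding M_def by (simp add: max_def)
  show ?case
  proof (rule exI[of _ M], intro conjI allI impI Mpos)
    fix V :: "'a set" and E t W
    assume sg: "simple_graph V E" and sp: "sparse c t V E" and t1: "t \<ge> 1"
      and WW: "\<forall>y\<in>insert x X. W y \<subseteq> V \<and> real (card (W y)) \<ge> M * t"
    have fV: "finite V" using sg unfolding simple_graph_def by auto
    have Esym: "\<And>u v. E u v \<Longrightarrow> E v u" and Eirr: "\<And>u. \<not> E u u" using sg unfolding simple_graph_def by auto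
    define Bad where "Bad = (\<Union>y\<in>X. hiset V E c (W y))"
    have Mge1: "M \<ge> 1" unfolding M_def by (simp add: max_def)
    have hs: "real (card (hiset V E c (W y))) < t" if "y \<in> X" for y
    proof (rule hiset_small[OF fV sp])
      show "W y \<subseteq> V" using WW that by auto
      have "M * t \<ge> 1 * t" using Mge1 t1 by (intro mult_right_mono) auto
      then show "real (card (W y)) \<ge> t" using WW that by auto
    qed (use t1 in auto)
    have "card Bad \<le> (\<Sum>y\<in>X. card (hiset V E c (W y)))" unfolding Bad_def by (rule card_UN_le) (use insert in auto)
    then have "real (card Bad) \<le> (\<Sum>y\<in>X. real (card (hiset V E c (W y))))" by (metis of_nat_le_iff of_nat_sum)
    also have "\<dots> \<le> (\<Sum>y\<in>X. t)" by (rule sum_mono) (use hs in \<open>auto intro: less_imp_le\<close>)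
    finally have cB: "real (card Bad) \<le> real (card X) * t" by simp
    have "M * t \<ge> (real (card X) + 1) * t" unfolding M_def using t1 by (intro mult_right_mono) auto
    then have cWx: "real (card (W x)) > real (card X) * t" using WW t1 by (auto simp: algebra_simps)
    have "\<not> W x \<subseteq> Bad"
    proof
      assume "W x \<subseteq> Bad"
      moreover have "finite Bad" unfolding Bad_def hiset_def using insert.hyps(1) fV by auto
      ultimately have "card (W x) \<le> card Bad" by (intro card_mono)
      then show False using cB cWx by linarith
    qed
    then obtain v where v: "v \<in> W x" "v \<notin> Bad" by auto
    have vV: "v \<in> V" using v WW by auto
    define W' where "W' = (\<lambda>y. W y - nb E v)"
    have "\<forall>y\<in>X. W' y \<subseteq> V \<and> real (card (W' y)) \<ge> M' * t"
    proof
      fix y assume y: "y \<in> X"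
      have fW: "finite (W y)" using WW y fV finite_subset by blast
      have "v \<notin> hiset V E c (W y)" using v y unfolding Bad_def by auto
      then have "real (card (W' y)) \<ge> c * real (card (W y)) - 1" unfolding W'_def by (rule shrink[OF fW _ vV])
      moreover have "c * real (card (W y)) \<ge> c * (M * t)" using WW y assms(2) by (intro mult_left_mono) auto
      moreover have "c * (M * t) \<ge> (M' + 1) * t"
      proof -
        have "c * M \<ge> M' + 1" unfolding M_def using assms(2) by (auto simp: max_def field_simps split: if_splits)
        then show ?thesis using t1 by (metis mult.assoc mult_right_mono order_trans zero_le_one)
      qed
      ultimately show "W' y \<subseteq> V \<and> real (card (W' y)) \<ge> M' * t" using WW y t1 unfolding W'_def
        by (auto simp: algebra_simps)
    qed
    then obtain p' where p': "\<forall>y\<in>X. p' y \<in> W' y" "inj_on p' X" "\<forall>y\<in>X. \<forall>y'\<in>X. \<not> E (p' y) (p' y')"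
      using M' sg sp t1 by blast
    define p where "p = p'(x := v)"
    have pX: "\<forall>y\<in>X. p y = p' y" unfolding p_def using insert by auto
    have notv: "\<forall>y\<in>X. p' y \<noteq> v \<and> \<not> E v (p' y)" using p'(1) unfolding W'_def nb_def by auto
    show "\<exists>p. (\<forall>y\<in>insert x X. p y \<in> W y) \<and> inj_on p (insert x X) \<and>
           (\<forall>y\<in>insert x X. \<forall>y'\<in>insert x X. \<not> E (p y) (p y'))"
    proof (rule exI[of _ p], intro conjI)
      show "\<forall>y\<in>insert x X. p y \<in> W y" using pX p'(1) v unfolding W'_def by (auto simp: p_def)
      show "inj_on p (insert x X)" using p'(2) notv pX insert.hyps(2)
        by (auto simp: p_def inj_on_def)
      show "\<forall>y\<in>insert x X. \<forall>y'\<in>insert x X. \<not> E (p y) (p y')"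
        using p'(3) notv pX Esym Eirr insert.hyps(2) by (auto simp: p_def) 
    qed
  qed
qed

definition indep_maps :: "'b set \<Rightarrow> 'a set \<Rightarrow> ('a \<Rightarrow> 'a \<Rightarrow> bool) \<Rightarrow> ('b \<Rightarrow> 'a) set" where
  "indep_maps Y W E = {f \<in> Y \<rightarrow>\<^sub>E W. inj_on f Y \<and> (\<forall>y\<in>Y. \<forall>y'\<in>Y. \<not> E (f y) (f y'))}"

lemma finite_indep_maps: "finite Y \<Longrightarrow> finite W \<Longrightarrow> finite (indep_maps Y W E)"
  unfolding indep_maps_def by (rule finite_subset[of _ "Y \<rightarrow>\<^sub>E W"]) (auto intro!: finite_PiE)

lemma indep_count:
  assumes "finite Y" "c > 0"
  shows "\<exists>L>0. \<exists>\<delta>>0. \<forall>(V::'a set) E t W. simple_graph V E \<longrightarrow> sparse c t V E \<longrightarrow> t \<ge> 1 \<longrightarrow>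
     W \<subseteq> V \<longrightarrow> real (card W) \<ge> L * t \<longrightarrow>
     real (card (indep_maps Y W E)) \<ge> \<delta> * real (card W) ^ card Y"
  using assms(1)
proof (induction Y rule: finite_induct)
  case empty
  show ?case
    by (rule exI[of _ 1], simp, rule exI[of _ 1]) (auto simp: indep_maps_def)
next
  case (insert y Y)
  obtain L' \<delta>' where L'pos: "L' > 0" and d'pos: "\<delta>' > 0" and IH:
    "\<forall>(V::'a set) E t W. simple_graph V E \<longrightarrow> sparse c t V E \<longrightarrow> t \<ge> 1 \<longrightarrow>
     W \<subseteq> V \<longrightarrow> real (card W) \<ge> L' * t \<longrightarrow>
     real (card (indep_maps Y W E)) \<ge> \<delta>' * real (card W) ^ card Y"
    using insert.IH by blast
  define m where "m = card Y"
  define L where "L = max (max 2 (2 / c)) (2 * L' / c)"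
  define \<delta> where "\<delta> = \<delta>' * (c / 2) ^ m / 2"
  have Lpos: "L > 0" unfolding L_def by simp
  have dpos: "\<delta> > 0" unfolding \<delta>_def using d'pos assms(2) by simp
  show ?case
  proof (rule exI[of _ L], intro conjI Lpos, rule exI[of _ \<delta>], intro conjI dpos allI impI)
    fix V :: "'a set" and E t W
    assume sg: "simple_graph V E" and sp: "sparse c t V E" and t1: "t \<ge> 1"
      and WV: "W \<subseteq> V" and cW: "real (card W) \<ge> L * t"
    have fV: "finite V" using sg unfolding simple_graph_def by auto
    have fW: "finite W" using fV WV finite_subset by auto
    have Esym: "\<And>u v. E u v \<Longrightarrow> E v u" and Eirr: "\<And>u. \<not> E u u" using sg unfolding simple_graph_def by auto
    define w where "w = real (card W)"
    have "L \<ge> 2" "L \<ge> 2 / c" "L \<ge> 2 * L' / c" unfolding L_def by auto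
    then have "L * t \<ge> 2 * t" "L * t \<ge> (2 / c) * t" "L * t \<ge> (2 * L' / c) * t"
      using t1 by (auto intro!: mult_right_mono simp del: times_divide_eq_left)
    then have w2t: "w \<ge> 2 * t" and wc: "w \<ge> (2 / c) * t" and wL: "w \<ge> (2 * L' / c) * t"
      using cW unfolding w_def by linarith+
    define B where "B = hiset V E c W"
    have cB: "real (card B) < t" unfolding B_def
      by (rule hiset_small[OF fV sp WV]) (use w2t t1 w_def in auto)
    define Wv where "Wv = (\<lambda>v. W - nb E v)"
    have "(2 / c) * t \<ge> (2 / c) * 1" using t1 assms(2) by (intro mult_left_mono) auto
    then have "w \<ge> 2 / c" using wc by linarith
    then have cwge: "c * w \<ge> 2" using assms(2) by (simp add: field_simps)
    have Wvbig: "real (card (Wv v)) \<ge> c * w / 2" and WvL: "real (card (Wv v)) \<ge> L' * t"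
      if "v \<in> W - B" for v
    proof -
      have "real (card (Wv v)) \<ge> c * w - 1" unfolding Wv_def w_def
        by (rule shrink[OF fW]) (use that B_def WV in auto)
      then show "real (card (Wv v)) \<ge> c * w / 2" using cwge by linarith
      moreover have "c * w / 2 \<ge> L' * t" using wL assms(2) by (simp add: field_simps)
      ultimately show "real (card (Wv v)) \<ge> L' * t" by linarith
    qed
    have cnt: "real (card (indep_maps Y (Wv v) E)) \<ge> \<delta>' * (c * w / 2) ^ m" if "v \<in> W - B" for v
    proof -
      have "real (card (indep_maps Y (Wv v) E)) \<ge> \<delta>' * real (card (Wv v)) ^ m"
        using IH sg sp t1 WvL[OF that] WV unfolding m_def Wv_def by blast
      moreover have "(c * w / 2) ^ m \<le> real (card (Wv v)) ^ m"
        by (rule power_mono[OF Wvbig[OF that]]) (use assms(2) w_def in auto)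
      ultimately show ?thesis using d'pos by (meson mult_left_mono less_imp_le order_trans)
    qed
    define F where "F = (\<lambda>(v, g::'b \<Rightarrow> 'a). g(y := v))"
    define S where "S = Sigma (W - B) (\<lambda>v. indep_maps Y (Wv v) E)"
    have finS: "finite S" unfolding S_def
      by (intro finite_SigmaI finite_indep_maps) (use fW insert.hyps(1) in \<open>auto simp: Wv_def\<close>)
    have injF: "inj_on F S"
    proof (rule inj_onI)
      fix a b assume a: "a \<in> S" and b: "b \<in> S" and eq: "F a = F b"
      obtain v g where av: "a = (v, g)" by (cases a)
      obtain v' g' where bv: "b = (v', g')" by (cases b)
      have "g \<in> indep_maps Y (Wv v) E" using a unfolding av S_def by blast
      then have g1: "g \<in> Y \<rightarrow>\<^sub>E Wv v" unfolding indep_maps_def by blast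
      have "g' \<in> indep_maps Y (Wv v') E" using b unfolding bv S_def by blast
      then have g2: "g' \<in> Y \<rightarrow>\<^sub>E Wv v'" unfolding indep_maps_def by blast
      have e2: "g(y := v) = g'(y := v')" using eq unfolding av bv F_def by simp
      have "v = v'" using fun_cong[OF e2, of y] by simp
      moreover have "g = g'"
      proof
        fix z show "g z = g' z"
        proof (cases "z = y")
          case True
          have "g y = undefined" by (rule PiE_arb[OF g1 insert.hyps(2)])
          moreover have "g' y = undefined" by (rule PiE_arb[OF g2 insert.hyps(2)])
          ultimately show ?thesis using True by simp
        next
          case False then show ?thesis using fun_cong[OF e2, of z] by simp
        qed
      qed
      ultimately show "a = b" using av bv by simp
    qed
    have FS: "F ` S \<subseteq> indep_maps (insert y Y) W E"
    proof
      fix f assume "f \<in> F ` S"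
      then obtain a where a: "a \<in> S" and fa: "f = F a" by blast
      obtain v g where av: "a = (v, g)" by (cases a)
      have f: "f = g(y := v)" using fa unfolding av F_def by simp
      have v: "v \<in> W - B" using a unfolding av S_def by blast
      have "g \<in> indep_maps Y (Wv v) E" using a unfolding av S_def by blast
      then have g: "g \<in> Y \<rightarrow>\<^sub>E Wv v" "inj_on g Y" "\<forall>a\<in>Y. \<forall>b\<in>Y. \<not> E (g a) (g b)"
        unfolding indep_maps_def by blast+
      have gv: "\<forall>a\<in>Y. g a \<in> W \<and> g a \<noteq> v \<and> \<not> E v (g a)"
      proof
        fix a assume "a \<in> Y"
        then show "g a \<in> W \<and> g a \<noteq> v \<and> \<not> E v (g a)" using PiE_mem[OF g(1)] unfolding Wv_def nb_def by blast
      qed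
      have "f \<in> insert y Y \<rightarrow>\<^sub>E W"
      proof (rule PiE_I)
        fix z assume "z \<in> insert y Y"
        then show "f z \<in> W" using gv v unfolding f by (cases "z = y") auto
      next
        fix z assume "z \<notin> insert y Y"
        then show "f z = undefined" unfolding f using PiE_arb[OF g(1)] by auto
      qed
      moreover have "inj_on f (insert y Y)"
      proof -
        have "inj_on g Y" by (rule g(2))
        moreover have "v \<notin> g ` Y" using gv by auto
        moreover have "inj_on (g(y := v)) Y = inj_on g Y"
          by (rule inj_on_cong) (use insert.hyps(2) in auto)
        moreover have "Y \<inter> {x. x \<noteq> y} = Y" using insert.hyps(2) by auto
        ultimately have "inj_on (g(y := v)) (insert y Y)" using insert.hyps(2) by simp
        then show ?thesis unfolding f .
      qed
      moreover have "\<forall>a\<in>insert y Y. \<forall>b\<in>insert y Y. \<not> E (f a) (f b)"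
      proof (intro ballI)
        fix a b assume a: "a \<in> insert y Y" and b: "b \<in> insert y Y"
        show "\<not> E (f a) (f b)"
        proof (cases "a = y"; cases "b = y")
          assume "a = y" "b = y" then show ?thesis unfolding f using Eirr by simp
        next
          assume "a = y" "b \<noteq> y" then show ?thesis unfolding f using gv b by simp
        next
          assume "a \<noteq> y" "b = y" then show ?thesis unfolding f using gv a Esym by auto
        next
          assume "a \<noteq> y" "b \<noteq> y" then show ?thesis unfolding f using g(3) a b by simp
        qed
      qed
      ultimately show "f \<in> indep_maps (insert y Y) W E" unfolding indep_maps_def by blast
    qed
    have fin2: "finite (indep_maps (insert y Y) W E)"
      using fW insert.hyps(1) by (auto intro!: finite_indep_maps)
    have c1: "card S \<le> card (indep_maps (insert y Y) W E)"
      using card_inj_on_le[OF injF FS fin2] .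
    have c2: "card S = (\<Sum>v\<in>W - B. card (indep_maps Y (Wv v) E))"
      unfolding S_def by (rule card_SigmaI) (use fW insert.hyps(1) in \<open>auto intro!: finite_indep_maps simp: Wv_def\<close>)
    have c3: "(\<Sum>v\<in>W - B. real (card (indep_maps Y (Wv v) E))) \<ge> (\<Sum>v\<in>W - B. \<delta>' * (c * w / 2) ^ m)"
      by (rule sum_mono) (use cnt in auto)
    have c4: "real (card (W - B)) \<ge> w / 2"
    proof -
      have fB: "finite B" unfolding B_def hiset_def using fV by simp
      have "card W \<le> card ((W - B) \<union> B)" by (rule card_mono) (use fW fB in auto)
      also have "\<dots> \<le> card (W - B) + card B" by (rule card_Un_le)
      finally have "card W \<le> card (W - B) + card B" .
      then show ?thesis using cB w2t t1 unfolding w_def by linarith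
    qed
    have c5: "(\<Sum>v\<in>W - B. \<delta>' * (c * w / 2) ^ m) = real (card (W - B)) * (\<delta>' * (c * w / 2) ^ m)"
      by simp
    have pos: "\<delta>' * (c * w / 2) ^ m \<ge> 0" using d'pos assms(2) w2t t1 by (simp add: w_def)
    have c6: "real (card (W - B)) * (\<delta>' * (c * w / 2) ^ m) \<ge> (w / 2) * (\<delta>' * (c * w / 2) ^ m)"
      by (rule mult_right_mono[OF c4 pos])
    have "real (card S) = (\<Sum>v\<in>W - B. real (card (indep_maps Y (Wv v) E)))"
      unfolding c2 by simp
    then have "real (card (indep_maps (insert y Y) W E)) \<ge> (w / 2) * (\<delta>' * (c * w / 2) ^ m)"
      using c1 c3 c5 c6 by linarith
    moreover have "(w / 2) * (\<delta>' * (c * w / 2) ^ m) = \<delta> * w ^ card (insert y Y)"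
    proof -
      have "card (insert y Y) = Suc m" using insert.hyps m_def by simp
      then show ?thesis unfolding \<delta>_def by (simp add: power_mult_distrib power_divide mult_ac)
    qed
    ultimately show "real (card (indep_maps (insert y Y) W E)) \<ge> \<delta> * real (card W) ^ card (insert y Y)"
      unfolding w_def by simp
  qed
qed

definition badg :: "'z set \<Rightarrow> 'a set \<Rightarrow> 'a set \<Rightarrow> ('a \<Rightarrow> 'a \<Rightarrow> bool) \<Rightarrow> real \<Rightarrow> ('z \<Rightarrow> 'a) set" where
  "badg Z U W E r = {g \<in> Z \<rightarrow>\<^sub>E U. real (card (W - (\<Union>z\<in>Z. nb E (g z)))) < r}"

lemma finite_badg: "finite Z \<Longrightarrow> finite U \<Longrightarrow> finite (badg Z U W E r)"
  unfolding badg_def by (rule finite_subset[of _ "Z \<rightarrow>\<^sub>E U"]) (auto intro!: finite_PiE)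

lemma pow_pred: "real m * u ^ (m - 1) * u = real m * (u::real) ^ m"
  by (cases m) auto

lemma seq_bad:
  assumes "c > 0" "K0 \<ge> 0"
  shows "\<exists>K\<ge>K0. \<forall>(Z::'z set). finite Z \<longrightarrow> card Z \<le> m \<longrightarrow>
    (\<forall>(V::'a set) E t W U. simple_graph V E \<longrightarrow> sparse c t V E \<longrightarrow> t \<ge> 1 \<longrightarrow> W \<subseteq> V \<longrightarrow> U \<subseteq> V \<longrightarrow>
       real (card W) \<ge> K * t \<longrightarrow>
       real (card (badg Z U W E (K0 * t))) \<le> real (card Z) * t * real (card U) ^ (card Z - 1))"
proof (induction m)
  case 0
  show ?case
  proof (rule exI[of _ K0], intro conjI order_refl allI impI)
    fix Z :: "'z set" and V :: "'a set" and E t W U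
    assume "finite Z" "card Z \<le> 0" "simple_graph V E" "sparse c t V E" "t \<ge> 1" "W \<subseteq> V" "U \<subseteq> V"
      "real (card W) \<ge> K0 * t"
    then have "Z = {}" by simp
    then have "badg Z U W E (K0 * t) = {}" unfolding badg_def using \<open>real (card W) \<ge> K0 * t\<close> by auto
    then show "real (card (badg Z U W E (K0 * t))) \<le> real (card Z) * t * real (card U) ^ (card Z - 1)"
      using \<open>t \<ge> 1\<close> by simp
  qed
next
  case (Suc m)
  obtain Km where KmK0: "Km \<ge> K0" and IH: "\<forall>(Z::'z set). finite Z \<longrightarrow> card Z \<le> m \<longrightarrow>
    (\<forall>(V::'a set) E t W U. simple_graph V E \<longrightarrow> sparse c t V E \<longrightarrow> t \<ge> 1 \<longrightarrow> W \<subseteq> V \<longrightarrow> U \<subseteq> V \<longrightarrow>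
       real (card W) \<ge> Km * t \<longrightarrow>
       real (card (badg Z U W E (K0 * t))) \<le> real (card Z) * t * real (card U) ^ (card Z - 1))"
    using Suc.IH by blast
  define K where "K = max (max Km ((Km + 1) / c)) 1"
  have KKm: "K \<ge> Km" and KK1: "K \<ge> 1" and KKc0: "K \<ge> (Km + 1) / c"
    unfolding K_def by auto
  have "c * K \<ge> c * ((Km + 1) / c)" using KKc0 assms(1) by (intro mult_left_mono) auto
  then have KKc: "c * K \<ge> Km + 1" using assms(1) by simp
  show ?case
  proof (rule exI[of _ K], intro conjI allI impI)
    show "K \<ge> K0" using KKm KmK0 by linarith
  next
    fix Z :: "'z set" and V :: "'a set" and E t W U
    assume fZ: "finite Z" and cZ: "card Z \<le> Suc m" and sg: "simple_graph V E" and sp: "sparse c t V E"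
      and t1: "t \<ge> 1" and WV: "W \<subseteq> V" and UV: "U \<subseteq> V" and cW: "real (card W) \<ge> K * t"
    have fV: "finite V" using sg unfolding simple_graph_def by auto
    have fW: "finite W" and fU: "finite U" using fV WV UV finite_subset by auto
    have cWm: "real (card W) \<ge> Km * t" using cW KKm t1 by (meson order_trans mult_right_mono less_le_trans zero_less_one less_imp_le)
    show "real (card (badg Z U W E (K0 * t))) \<le> real (card Z) * t * real (card U) ^ (card Z - 1)"
    proof (cases "card Z \<le> m")
      case True
      then show ?thesis using IH fZ sg sp t1 WV UV cWm by blast
    next
      case False
      then have cZm: "card Z = Suc m" using cZ by simp
      then obtain y where yZ: "y \<in> Z" by (metis card.empty ex_in_conv nat.distinct(1))
      define Z' where "Z' = Z - {y}"
      have fZ': "finite Z'" using fZ unfolding Z'_def by simp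
      have cZ': "card Z' = m" using cZm yZ fZ unfolding Z'_def by simp
      have ZZ': "Z = insert y Z'" "y \<notin> Z'" using yZ unfolding Z'_def by auto
      define u where "u = real (card U)"
      define B where "B = hiset V E c W"
      have "K * t \<ge> 1 * t" using KK1 t1 by (intro mult_right_mono) auto
      then have tW: "t \<le> real (card W)" using cW by simp
      have cB: "real (card B) < t" unfolding B_def
        by (rule hiset_small[OF fV sp WV tW]) (use t1 in simp)
      define Wv where "Wv = (\<lambda>v. W - nb E v)"
      have Wvbig: "real (card (Wv v)) \<ge> Km * t" if "v \<in> U" "v \<notin> B" for v
      proof -
        have "real (card (Wv v)) \<ge> c * real (card W) - 1" unfolding Wv_def
          by (rule shrink[where V=V, OF fW]) (use that B_def UV in auto)
        moreover have "c * real (card W) \<ge> c * (K * t)" using cW assms(1) by (intro mult_left_mono) auto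
        moreover have "c * (K * t) \<ge> (Km + 1) * t" using KKc t1
          by (metis mult.assoc mult_right_mono order_trans zero_le_one)
        ultimately show ?thesis using t1 by (simp add: algebra_simps)
      qed
      define F where "F = (\<lambda>v. if v \<in> B then Z' \<rightarrow>\<^sub>E U else badg Z' U (Wv v) E (K0 * t))"
      have sub: "badg Z U W E (K0 * t) \<subseteq> (\<Union>v\<in>U. (\<lambda>g'. g'(y := v)) ` F v)"
      proof
        fix g assume g: "g \<in> badg Z U W E (K0 * t)"
        then have gP: "g \<in> Z \<rightarrow>\<^sub>E U" and gc: "real (card (W - (\<Union>z\<in>Z. nb E (g z)))) < K0 * t"
          unfolding badg_def by blast+
        define v where "v = g y"
        define g' where "g' = g(y := undefined)"
        have vU: "v \<in> U" using PiE_mem[OF gP yZ] unfolding v_def .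
        have gg: "g = g'(y := v)" unfolding g'_def v_def by simp
        have g'P: "g' \<in> Z' \<rightarrow>\<^sub>E U"
        proof (rule PiE_I)
          fix z assume "z \<in> Z'" then show "g' z \<in> U" unfolding g'_def using PiE_mem[OF gP] ZZ' by auto
        next
          fix z assume "z \<notin> Z'" then show "g' z = undefined" unfolding g'_def using PiE_arb[OF gP] ZZ' by auto
        qed
        have "g' \<in> F v"
        proof (cases "v \<in> B")
          case True then show ?thesis unfolding F_def using g'P by simp
        next
          case False
          have g'eq: "\<And>z. z \<in> Z' \<Longrightarrow> g' z = g z" using ZZ'(2) unfolding g'_def by auto
          have "(\<Union>z\<in>Z'. nb E (g' z)) = (\<Union>z\<in>Z'. nb E (g z))" using g'eq by simp
          moreover have "(\<Union>z\<in>Z. nb E (g z)) = nb E v \<union> (\<Union>z\<in>Z'. nb E (g z))"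
            unfolding v_def using ZZ'(1) by simp
          ultimately have "(\<Union>z\<in>Z. nb E (g z)) = nb E v \<union> (\<Union>z\<in>Z'. nb E (g' z))" by simp
          then have "W - (\<Union>z\<in>Z. nb E (g z)) = Wv v - (\<Union>z\<in>Z'. nb E (g' z))" unfolding Wv_def by auto
          then have "g' \<in> badg Z' U (Wv v) E (K0 * t)" unfolding badg_def using g'P gc by simp
          then show ?thesis unfolding F_def using False by simp
        qed
        then show "g \<in> (\<Union>v\<in>U. (\<lambda>g'. g'(y := v)) ` F v)" using vU gg by blast
      qed
      have fF: "finite (F v)" for v unfolding F_def using fZ' fU by (auto intro: finite_PiE finite_badg)
      have "card (badg Z U W E (K0 * t)) \<le> card (\<Union>v\<in>U. (\<lambda>g'. g'(y := v)) ` F v)"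
        by (rule card_mono[OF _ sub]) (use fU fF in auto)
      also have "\<dots> \<le> (\<Sum>v\<in>U. card ((\<lambda>g'. g'(y := v)) ` F v))" by (rule card_UN_le[OF fU])
      also have "\<dots> \<le> (\<Sum>v\<in>U. card (F v))" by (rule sum_mono) (rule card_image_le[OF fF])
      finally have c1: "real (card (badg Z U W E (K0 * t))) \<le> (\<Sum>v\<in>U. real (card (F v)))"
        by (metis of_nat_le_iff of_nat_sum)
      have c2: "real (card (F v)) \<le> (if v \<in> B then u ^ m else real m * t * u ^ (m - 1))" if "v \<in> U" for v
      proof (cases "v \<in> B")
        case True
        have "card (Z' \<rightarrow>\<^sub>E U) = card U ^ card Z'" using fZ' by (simp add: card_PiE)
        then show ?thesis unfolding F_def using True cZ' u_def by simp
      next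
        case False
        have "real (card (badg Z' U (Wv v) E (K0 * t))) \<le> real (card Z') * t * real (card U) ^ (card Z' - 1)"
        proof -
          have WvV: "Wv v \<subseteq> V" unfolding Wv_def using WV by auto
          have "card Z' \<le> m" using cZ' by simp
          then show ?thesis using IH fZ' sg sp t1 UV WvV Wvbig[OF that False] by blast
        qed
        then show ?thesis unfolding F_def using False cZ' u_def by simp
      qed
      have "(\<Sum>v\<in>U. real (card (F v))) \<le> (\<Sum>v\<in>U. (if v \<in> B then u ^ m else real m * t * u ^ (m - 1)))"
        by (rule sum_mono) (use c2 in auto)
      also have "\<dots> = (\<Sum>v\<in>U \<inter> {v. v \<in> B}. u ^ m) + (\<Sum>v\<in>U \<inter> - {v. v \<in> B}. real m * t * u ^ (m - 1))"
        by (rule sum.If_cases[OF fU])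
      also have "\<dots> = real (card (U \<inter> B)) * u ^ m + real (card (U - B)) * (real m * t * u ^ (m - 1))"
        by (simp add: Diff_eq)
      also have "\<dots> \<le> t * u ^ m + u * (real m * t * u ^ (m - 1))"
      proof (rule add_mono)
        have "finite B" unfolding B_def hiset_def using fV by simp
        then have "card (U \<inter> B) \<le> card B" by (rule card_mono) auto
        then have "real (card (U \<inter> B)) \<le> t" using cB by linarith
        then show "real (card (U \<inter> B)) * u ^ m \<le> t * u ^ m" by (rule mult_right_mono) (simp add: u_def)
        have "card (U - B) \<le> card U" by (rule card_mono) (use fU in auto)
        then have "real (card (U - B)) \<le> u" unfolding u_def by simp
        then show "real (card (U - B)) * (real m * t * u ^ (m - 1)) \<le> u * (real m * t * u ^ (m - 1))"
          by (rule mult_right_mono) (use t1 u_def in simp)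
      qed
      also have "\<dots> = real (card Z) * t * u ^ (card Z - 1)"
      proof -
        have "u * (real m * t * u ^ (m - 1)) = t * (real m * u ^ (m - 1) * u)" by (simp add: mult_ac)
        also have "\<dots> = t * (real m * u ^ m)" by (simp only: pow_pred)
        finally show ?thesis using cZm by (simp add: algebra_simps)
      qed
      finally show ?thesis using c1 unfolding u_def by linarith
    qed
  qed
qed

definition cn :: "'a set \<Rightarrow> ('a \<Rightarrow> 'a \<Rightarrow> bool) \<Rightarrow> 'a set \<Rightarrow> 'a set" where
  "cn VG EG A = {v\<in>VG. \<forall>a\<in>A. EG a v}"

lemma exch:
  assumes fVG: "finite VG" and fI: "finite I" and fS: "finite S" and sym: "\<And>u v. EG u v \<Longrightarrow> EG v u"
  shows "(\<Sum>T\<in>I \<rightarrow>\<^sub>E VG. card {g \<in> S \<rightarrow>\<^sub>E cn VG EG (T ` I). P g})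
       = (\<Sum>g\<in>{g \<in> S \<rightarrow>\<^sub>E VG. P g}. card (cn VG EG (g ` S)) ^ card I)"
proof -
  define A where "A = {g \<in> S \<rightarrow>\<^sub>E VG. P g}"
  define R where "R = (\<lambda>T g. \<forall>i\<in>I. \<forall>j\<in>S. EG (T i) (g j))"
  have fA: "finite A" unfolding A_def by (rule finite_subset[of _ "S \<rightarrow>\<^sub>E VG"]) (auto intro!: finite_PiE fS fVG)
  have fD: "finite (I \<rightarrow>\<^sub>E VG)" by (intro finite_PiE fI fVG)
  have e1: "{g \<in> S \<rightarrow>\<^sub>E cn VG EG (T ` I). P g} = {g \<in> A. R T g}" for T
    unfolding A_def R_def cn_def by (auto simp: PiE_iff)
  have e2: "{T \<in> I \<rightarrow>\<^sub>E VG. R T g} = I \<rightarrow>\<^sub>E cn VG EG (g ` S)" for g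
    unfolding R_def cn_def by (auto simp: PiE_iff extensional_def intro: sym)
  have "(\<Sum>T\<in>I \<rightarrow>\<^sub>E VG. card {g \<in> S \<rightarrow>\<^sub>E cn VG EG (T ` I). P g}) = (\<Sum>T\<in>I \<rightarrow>\<^sub>E VG. card {g \<in> A. R T g})"
    using e1 by simp
  also have "\<dots> = (\<Sum>g\<in>A. card {T \<in> I \<rightarrow>\<^sub>E VG. R T g})" by (rule sum_card_swap[OF fD fA])
  also have "\<dots> = (\<Sum>g\<in>A. card (cn VG EG (g ` S)) ^ card I)"
    using e2 by (simp add: card_PiE fI)
  finally show ?thesis unfolding A_def .
qed

lemma degsum:
  assumes fVG: "finite VG" and fI: "finite I" and sym: "\<And>u v. EG u v \<Longrightarrow> EG v u"
  shows "(\<Sum>s\<in>I \<rightarrow>\<^sub>E VG. card (cn VG EG (s ` I))) = (\<Sum>v\<in>VG. card (cn VG EG {v}) ^ card I)"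
proof -
  define R where "R = (\<lambda>s v. \<forall>i\<in>I. EG (s i) v)"
  have fD: "finite (I \<rightarrow>\<^sub>E VG)" by (intro finite_PiE fI fVG)
  have e1: "cn VG EG (s ` I) = {v \<in> VG. R s v}" for s unfolding cn_def R_def by auto
  have e2: "{s \<in> I \<rightarrow>\<^sub>E VG. R s v} = I \<rightarrow>\<^sub>E cn VG EG {v}" for v
    unfolding R_def cn_def by (auto simp: PiE_iff extensional_def intro: sym)
  have "(\<Sum>s\<in>I \<rightarrow>\<^sub>E VG. card (cn VG EG (s ` I))) = (\<Sum>s\<in>I \<rightarrow>\<^sub>E VG. card {v \<in> VG. R s v})"
    using e1 by simp
  also have "\<dots> = (\<Sum>v\<in>VG. card {s \<in> I \<rightarrow>\<^sub>E VG. R s v})" by (rule sum_card_swap[OF fD fVG])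
  also have "\<dots> = (\<Sum>v\<in>VG. card (cn VG EG {v}) ^ card I)" using e2 by (simp add: card_PiE fI)
  finally show ?thesis .
qed

lemma edges_le_degsum:
  assumes "finite VG"
  shows "num_edges VG EG \<le> (\<Sum>v\<in>VG. card (cn VG EG {v}))"
proof -
  define P where "P = {(u, v). u \<in> VG \<and> v \<in> VG \<and> EG u v}"
  have "{{u, v} | u v. u \<in> VG \<and> v \<in> VG \<and> EG u v} = (\<lambda>(u, v). {u, v}) ` P" unfolding P_def by auto
  moreover have "P = Sigma VG (\<lambda>u. cn VG EG {u})" unfolding P_def cn_def by auto
  moreover have "finite P" unfolding P_def by (rule finite_subset[of _ "VG \<times> VG"]) (use assms in auto)
  ultimately have "num_edges VG EG \<le> card (Sigma VG (\<lambda>u. cn VG EG {u}))"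
    unfolding num_edges_def by (metis card_image_le)
  also have "\<dots> = (\<Sum>v\<in>VG. card (cn VG EG {v}))" by (rule card_SigmaI) (use assms in \<open>auto simp: cn_def\<close>)
  finally show ?thesis .
qed

lemma drc_lower:
  assumes fVG: "finite VG" and ne: "VG \<noteq> {}" and sym: "\<And>u v. EG u v \<Longrightarrow> EG v u" and d: "d > 0"
  shows "real (\<Sum>T\<in>{..<d} \<rightarrow>\<^sub>E VG. card (cn VG EG (T ` {..<d})) ^ d)
     \<ge> real (card VG) ^ d * (real (card VG) * (real (num_edges VG EG) / real (card VG)) ^ d / real (card VG) ^ d) ^ d"
proof -
  define I where "I = {..<d::nat}"
  define D where "D = I \<rightarrow>\<^sub>E VG"
  define ng where "ng = real (card VG)"
  define e where "e = real (num_edges VG EG)"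
  have fI: "finite I" and cI: "card I = d" unfolding I_def by auto
  have fD: "finite D" unfolding D_def by (intro finite_PiE fI fVG)
  have cD: "card D = card VG ^ d" unfolding D_def using fI cI by (simp add: card_PiE)
  have ngpos: "ng > 0" unfolding ng_def using fVG ne by (simp add: card_gt_0_iff)
  have "card VG > 0" using fVG ne by (simp add: card_gt_0_iff)
  then have "card D > 0" unfolding cD by simp
  then have Dne: "D \<noteq> {}" by auto
  have s1: "(\<Sum>T\<in>D. card (cn VG EG (T ` I)) ^ d) = (\<Sum>g\<in>D. card (cn VG EG (g ` I)) ^ d)"
  proof -
    have "(\<Sum>T\<in>D. card {g \<in> I \<rightarrow>\<^sub>E cn VG EG (T ` I). True}) = (\<Sum>g\<in>{g \<in> I \<rightarrow>\<^sub>E VG. True}. card (cn VG EG (g ` I)) ^ card I)"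
      unfolding D_def by (rule exch[OF fVG fI fI sym])
    then show ?thesis unfolding D_def using fI cI by (simp add: card_PiE)
  qed
  have s2: "real (card D) * ((\<Sum>g\<in>D. real (card (cn VG EG (g ` I)))) / real (card D)) ^ d
      \<le> (\<Sum>g\<in>D. real (card (cn VG EG (g ` I))) ^ d)"
    by (rule jensen_pow[OF fD Dne]) auto
  have s3: "(\<Sum>g\<in>D. card (cn VG EG (g ` I))) = (\<Sum>v\<in>VG. card (cn VG EG {v}) ^ d)"
    unfolding D_def using degsum[OF fVG fI sym] cI by simp
  have s4: "ng * ((\<Sum>v\<in>VG. real (card (cn VG EG {v}))) / ng) ^ d \<le> (\<Sum>v\<in>VG. real (card (cn VG EG {v})) ^ d)"
    unfolding ng_def by (rule jensen_pow[OF fVG ne]) auto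
  have s5: "e \<le> (\<Sum>v\<in>VG. real (card (cn VG EG {v})))"
    unfolding e_def using edges_le_degsum[OF fVG, of EG] by (metis of_nat_le_iff of_nat_sum)
  have e0: "e \<ge> 0" unfolding e_def by simp
  have s6: "ng * (e / ng) ^ d \<le> ng * ((\<Sum>v\<in>VG. real (card (cn VG EG {v}))) / ng) ^ d"
    using s5 e0 ngpos by (intro mult_left_mono power_mono divide_right_mono) auto
  have s3r: "(\<Sum>g\<in>D. real (card (cn VG EG (g ` I)))) = (\<Sum>v\<in>VG. real (card (cn VG EG {v})) ^ d)"
    using arg_cong[OF s3, of real] by simp
  have s7: "ng * (e / ng) ^ d \<le> (\<Sum>g\<in>D. real (card (cn VG EG (g ` I))))"
    using s6 s4 unfolding s3r by linarith
  have cDr: "real (card D) = ng ^ d" unfolding ng_def cD by simp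
  have s8: "ng * (e / ng) ^ d / ng ^ d \<le> (\<Sum>g\<in>D. real (card (cn VG EG (g ` I)))) / real (card D)"
    unfolding cDr using s7 ngpos by (intro divide_right_mono) auto
  have s9: "(ng * (e / ng) ^ d / ng ^ d) ^ d \<le> ((\<Sum>g\<in>D. real (card (cn VG EG (g ` I)))) / real (card D)) ^ d"
    by (rule power_mono[OF s8]) (use ngpos e0 in simp)
  have "ng ^ d * (ng * (e / ng) ^ d / ng ^ d) ^ d \<le> (\<Sum>g\<in>D. real (card (cn VG EG (g ` I))) ^ d)"
  proof -
    have "ng ^ d * (ng * (e / ng) ^ d / ng ^ d) ^ d \<le> ng ^ d * (((\<Sum>g\<in>D. real (card (cn VG EG (g ` I)))) / real (card D)) ^ d)"
      by (rule mult_left_mono[OF s9]) (use ngpos in simp)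
    then show ?thesis using s2 unfolding cDr by linarith
  qed
  moreover have "real (\<Sum>T\<in>D. card (cn VG EG (T ` I)) ^ d) = (\<Sum>g\<in>D. real (card (cn VG EG (g ` I))) ^ d)"
    using arg_cong[OF s1, of real] by simp
  ultimately show ?thesis unfolding ng_def e_def D_def I_def by simp
qed

lemma drc_choose:
  fixes S :: "'x \<Rightarrow> 'y set" and VG :: "'a set"
  assumes fVG: "finite VG" and ngpos: "card VG > 0" and sym: "\<And>u v. EG u v \<Longrightarrow> EG v u"
    and fX: "finite X" and Sx: "\<forall>x\<in>X. finite (S x) \<and> card (S x) \<le> d"
    and eps: "\<epsilon> > 0" and r0: "r \<ge> 0" and lt0: "lt \<ge> 0"
    and big: "real (\<Sum>T\<in>{..<d} \<rightarrow>\<^sub>E VG. card (cn VG EG (T ` {..<d})) ^ d) \<ge> real (card VG) ^ d * A"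
    and Abig: "A > real (card X) / \<epsilon> * r ^ d + lt ^ d"
  shows "\<exists>T\<in>{..<d} \<rightarrow>\<^sub>E VG. lt ^ d < real (card (cn VG EG (T ` {..<d}))) ^ d \<and>
     (\<forall>x\<in>X. real (card {h \<in> S x \<rightarrow>\<^sub>E cn VG EG (T ` {..<d}). real (card (cn VG EG (h ` S x))) < r})
        < \<epsilon> * real (card (cn VG EG (T ` {..<d}))) ^ card (S x))"
proof -
  define I where "I = {..<d}"
  define D where "D = I \<rightarrow>\<^sub>E VG"
  define ng where "ng = real (card VG)"
  define u where "u = (\<lambda>T. real (card (cn VG EG (T ` I))))"
  define bad where "bad = (\<lambda>x T. real (card {h \<in> S x \<rightarrow>\<^sub>E cn VG EG (T ` I). real (card (cn VG EG (h ` S x))) < r}))"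
  define k where "k = (\<lambda>x. card (S x))"
  have fI: "finite I" and cI: "card I = d" unfolding I_def by auto
  have fD: "finite D" unfolding D_def by (intro finite_PiE fI fVG)
  have cD: "real (card D) = ng ^ d" unfolding D_def ng_def using fI cI by (simp add: card_PiE)
  have ng0: "ng > 0" unfolding ng_def using ngpos by simp
  have badsum: "(\<Sum>T\<in>D. bad x T) \<le> ng ^ k x * r ^ d" if x: "x \<in> X" for x
  proof -
    define P where "P = (\<lambda>h. real (card (cn VG EG (h ` S x))) < r)"
    have fS: "finite (S x)" using Sx x by auto
    have "(\<Sum>T\<in>D. card {h \<in> S x \<rightarrow>\<^sub>E cn VG EG (T ` I). P h}) = (\<Sum>h\<in>{h \<in> S x \<rightarrow>\<^sub>E VG. P h}. card (cn VG EG (h ` S x)) ^ card I)"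
      unfolding D_def by (rule exch[OF fVG fI fS sym])
    then have "(\<Sum>T\<in>D. bad x T) = (\<Sum>h\<in>{h \<in> S x \<rightarrow>\<^sub>E VG. P h}. real (card (cn VG EG (h ` S x))) ^ d)"
      unfolding bad_def P_def cI using arg_cong[of _ _ real] by (metis (no_types, lifting) of_nat_power of_nat_sum sum.cong)
    also have "\<dots> \<le> (\<Sum>h\<in>{h \<in> S x \<rightarrow>\<^sub>E VG. P h}. r ^ d)"
    proof (rule sum_mono)
      fix h assume "h \<in> {h \<in> S x \<rightarrow>\<^sub>E VG. P h}"
      then have "real (card (cn VG EG (h ` S x))) \<le> r" unfolding P_def by simp
      then show "real (card (cn VG EG (h ` S x))) ^ d \<le> r ^ d" by (rule power_mono) simp
    qed
    also have "\<dots> = real (card {h \<in> S x \<rightarrow>\<^sub>E VG. P h}) * r ^ d" by simp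
    also have "\<dots> \<le> real (card (S x \<rightarrow>\<^sub>E VG)) * r ^ d"
    proof (rule mult_right_mono)
      have "card {h \<in> S x \<rightarrow>\<^sub>E VG. P h} \<le> card (S x \<rightarrow>\<^sub>E VG)"
        by (rule card_mono) (auto intro!: finite_PiE fS fVG)
      then show "real (card {h \<in> S x \<rightarrow>\<^sub>E VG. P h}) \<le> real (card (S x \<rightarrow>\<^sub>E VG))" by simp
    qed (use r0 in simp)
    also have "\<dots> = ng ^ k x * r ^ d" unfolding ng_def k_def using fS by (simp add: card_PiE)
    finally show ?thesis .
  qed
  define \<phi> where "\<phi> = (\<lambda>T. u T ^ d - (1 / \<epsilon>) * (\<Sum>x\<in>X. bad x T * ng ^ (d - k x)) - lt ^ d)"
  have sumphi: "(\<Sum>T\<in>D. \<phi> T) = (\<Sum>T\<in>D. u T ^ d) - (1 / \<epsilon>) * (\<Sum>x\<in>X. ng ^ (d - k x) * (\<Sum>T\<in>D. bad x T)) - ng ^ d * lt ^ d"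
  proof -
    have "(\<Sum>T\<in>D. \<phi> T) = (\<Sum>T\<in>D. u T ^ d) - (\<Sum>T\<in>D. (1 / \<epsilon>) * (\<Sum>x\<in>X. bad x T * ng ^ (d - k x))) - (\<Sum>T\<in>D. lt ^ d)"
      unfolding \<phi>_def by (simp add: sum_subtractf)
    also have "(\<Sum>T\<in>D. (1 / \<epsilon>) * (\<Sum>x\<in>X. bad x T * ng ^ (d - k x))) = (1 / \<epsilon>) * (\<Sum>x\<in>X. ng ^ (d - k x) * (\<Sum>T\<in>D. bad x T))"
      by (simp add: sum_distrib_left sum_distrib_right mult_ac sum.swap[of _ D X])
    also have "(\<Sum>T\<in>D. lt ^ d) = ng ^ d * lt ^ d" using cD by simp
    finally show ?thesis .
  qed
  have "(\<Sum>x\<in>X. ng ^ (d - k x) * (\<Sum>T\<in>D. bad x T)) \<le> (\<Sum>x\<in>X. ng ^ d * r ^ d)"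
  proof (rule sum_mono)
    fix x assume x: "x \<in> X"
    have "ng ^ (d - k x) * (\<Sum>T\<in>D. bad x T) \<le> ng ^ (d - k x) * (ng ^ k x * r ^ d)"
      by (rule mult_left_mono[OF badsum[OF x]]) (use ng0 in simp)
    also have "\<dots> = ng ^ d * r ^ d"
    proof -
      have "d - k x + k x = d" using Sx x unfolding k_def by auto
      then have "ng ^ (d - k x) * ng ^ k x = ng ^ d" by (metis power_add)
      then show ?thesis by (simp add: mult.assoc[symmetric])
    qed
    finally show "ng ^ (d - k x) * (\<Sum>T\<in>D. bad x T) \<le> ng ^ d * r ^ d" .
  qed
  then have sb: "(\<Sum>x\<in>X. ng ^ (d - k x) * (\<Sum>T\<in>D. bad x T)) \<le> real (card X) * ng ^ d * r ^ d" by simp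
  have sU: "(\<Sum>T\<in>D. u T ^ d) \<ge> ng ^ d * A"
    using big unfolding u_def D_def I_def ng_def by simp
  have "(1 / \<epsilon>) * (\<Sum>x\<in>X. ng ^ (d - k x) * (\<Sum>T\<in>D. bad x T)) \<le> (1 / \<epsilon>) * (real (card X) * ng ^ d * r ^ d)"
    by (rule mult_left_mono[OF sb]) (use eps in simp)
  moreover have "ng ^ d * A > ng ^ d * (real (card X) / \<epsilon> * r ^ d + lt ^ d)"
    by (rule mult_strict_left_mono[OF Abig]) (use ng0 in simp)
  ultimately have "(\<Sum>T\<in>D. \<phi> T) > 0" unfolding sumphi using sU by (simp add: algebra_simps)
  then obtain T where TD: "T \<in> D" and phiT: "\<phi> T > 0"
    by (metis (no_types, lifting) not_less sum_nonpos)
  have bad0: "bad x T \<ge> 0" for x unfolding bad_def by simp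
  have terms0: "(\<Sum>x\<in>X. bad x T * ng ^ (d - k x)) \<ge> 0" using bad0 ng0 by (intro sum_nonneg) simp
  have main: "(1 / \<epsilon>) * (\<Sum>x\<in>X. bad x T * ng ^ (d - k x)) + lt ^ d < u T ^ d" using phiT unfolding \<phi>_def by simp
  have uT0: "u T \<ge> 0" unfolding u_def by simp
  have uTng: "u T \<le> ng" unfolding u_def ng_def by (simp add: card_mono[OF fVG] cn_def)
  show ?thesis
  proof (rule bexI[of _ T], intro conjI ballI)
    show "T \<in> {..<d} \<rightarrow>\<^sub>E VG" using TD unfolding D_def I_def .
    have "(1 / \<epsilon>) * (\<Sum>x\<in>X. bad x T * ng ^ (d - k x)) \<ge> 0" using terms0 eps by simp
    then show "lt ^ d < real (card (cn VG EG (T ` {..<d}))) ^ d" using main unfolding u_def I_def by linarith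
  next
    fix x assume x: "x \<in> X"
    have "bad x T * ng ^ (d - k x) \<le> (\<Sum>x\<in>X. bad x T * ng ^ (d - k x))"
      by (rule member_le_sum[OF x _ fX]) (use bad0 ng0 in simp)
    moreover have "lt ^ d \<ge> 0" using lt0 by simp
    ultimately have "(1 / \<epsilon>) * (bad x T * ng ^ (d - k x)) < u T ^ d"
      using main terms0 eps by (smt (verit, best) mult_left_mono zero_le_divide_1_iff)
    then have l1: "bad x T * ng ^ (d - k x) < \<epsilon> * u T ^ d" using eps by (simp add: field_simps)
    have "u T ^ d = u T ^ k x * u T ^ (d - k x)"
    proof -
      have "k x + (d - k x) = d" using Sx x unfolding k_def by auto
      then show ?thesis by (metis power_add)
    qed
    also have "\<dots> \<le> u T ^ k x * ng ^ (d - k x)"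
      by (rule mult_left_mono[OF power_mono[OF uTng uT0]]) (use uT0 in simp)
    finally have "bad x T * ng ^ (d - k x) < (\<epsilon> * u T ^ k x) * ng ^ (d - k x)"
      using l1 eps by (smt (verit, ccfv_SIG) mult.assoc mult_left_mono)
    then have "bad x T < \<epsilon> * u T ^ k x" using ng0 by (simp add: mult_less_cancel_right)
    then show "real (card {h \<in> S x \<rightarrow>\<^sub>E cn VG EG (T ` {..<d}). real (card (cn VG EG (h ` S x))) < r})
        < \<epsilon> * real (card (cn VG EG (T ` {..<d}))) ^ card (S x)"
      unfolding bad_def u_def k_def I_def .
  qed
qed

lemma split_count:
  fixes Y :: "'y set" and U :: "'u set" and P :: "('y \<Rightarrow> 'u) \<Rightarrow> bool"
  assumes fY: "finite Y" and SY: "S \<subseteq> Y" and fU: "finite U"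
    and PQ: "\<And>f. f \<in> Y \<rightarrow>\<^sub>E U \<Longrightarrow> P f \<Longrightarrow> Q (restrict f S) (restrict f (Y - S))"
  shows "card {f \<in> Y \<rightarrow>\<^sub>E U. P f} \<le> (\<Sum>h\<in>S \<rightarrow>\<^sub>E U. card {g \<in> (Y - S) \<rightarrow>\<^sub>E U. Q h g})"
proof -
  define F where "F = (\<lambda>f::'y \<Rightarrow> 'u. (restrict f S, restrict f (Y - S)))"
  define Sg where "Sg = Sigma (S \<rightarrow>\<^sub>E U) (\<lambda>h. {g \<in> (Y - S) \<rightarrow>\<^sub>E U. Q h g})"
  have fS: "finite S" using fY SY finite_subset by auto
  have inj: "inj_on F {f \<in> Y \<rightarrow>\<^sub>E U. P f}"
  proof (rule inj_onI)
    fix f f' assume f: "f \<in> {f \<in> Y \<rightarrow>\<^sub>E U. P f}" and f': "f' \<in> {f \<in> Y \<rightarrow>\<^sub>E U. P f}" and eq: "F f = F f'"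
    have fP: "f \<in> Y \<rightarrow>\<^sub>E U" using f by blast
    have fP': "f' \<in> Y \<rightarrow>\<^sub>E U" using f' by blast
    have e1: "restrict f S = restrict f' S" using eq unfolding F_def by (rule Pair_inject)
    have e2: "restrict f (Y - S) = restrict f' (Y - S)" using eq unfolding F_def by (rule Pair_inject)
    show "f = f'"
    proof
      fix z
      show "f z = f' z"
      proof (cases "z \<in> S")
        case True
        have "restrict f S z = restrict f' S z" using e1 by (rule fun_cong)
        then show ?thesis using True by simp
      next
        case False
        show ?thesis
        proof (cases "z \<in> Y")
          case True
          have "restrict f (Y - S) z = restrict f' (Y - S) z" using e2 by (rule fun_cong)
          then show ?thesis using True False by simp
        next
          case zY: False
          have "f z = undefined" by (rule PiE_arb[OF fP zY])
          moreover have "f' z = undefined" by (rule PiE_arb[OF fP' zY])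
          ultimately show ?thesis by simp
        qed
      qed
    qed
  qed
  have img: "F ` {f \<in> Y \<rightarrow>\<^sub>E U. P f} \<subseteq> Sg"
  proof
    fix a assume "a \<in> F ` {f \<in> Y \<rightarrow>\<^sub>E U. P f}"
    then obtain f where f: "f \<in> Y \<rightarrow>\<^sub>E U" "P f" and a: "a = F f" by blast
    have "f \<in> Pi S (\<lambda>_. U)" using f(1) SY by (auto simp: PiE_iff)
    then have r1: "restrict f S \<in> S \<rightarrow>\<^sub>E U" by simp
    have "f \<in> Pi (Y - S) (\<lambda>_. U)" using f(1) by (auto simp: PiE_iff)
    then have r2: "restrict f (Y - S) \<in> (Y - S) \<rightarrow>\<^sub>E U" by simp
    show "a \<in> Sg" unfolding a F_def Sg_def using r1 r2 PQ[OF f] by simp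
  qed
  have fP1: "finite (S \<rightarrow>\<^sub>E U)" by (rule finite_PiE[OF fS]) (use fU in simp)
  have fP2: "finite ((Y - S) \<rightarrow>\<^sub>E U)" by (rule finite_PiE) (use fU fY in simp_all)
  have fQ: "finite {g \<in> (Y - S) \<rightarrow>\<^sub>E U. Q h g}" for h by (rule finite_subset[OF _ fP2]) blast
  have fSg: "finite Sg" unfolding Sg_def by (rule finite_SigmaI[OF fP1 fQ])
  have "card {f \<in> Y \<rightarrow>\<^sub>E U. P f} \<le> card Sg" by (rule card_inj_on_le[OF inj img fSg])
  also have "\<dots> = (\<Sum>h\<in>S \<rightarrow>\<^sub>E U. card {g \<in> (Y - S) \<rightarrow>\<^sub>E U. Q h g})" unfolding Sg_def
    by (rule card_SigmaI[OF fP1]) (simp add: fQ)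
  finally show ?thesis .
qed

lemma edge_bound:
  fixes C t n ng e :: real and d :: nat
  assumes d: "d > 0" and C: "C > 0" and t: "t > 0" and nng: "n \<ge> ng" and ng: "ng > 0"
    and e: "e \<ge> C * t powr (1 / real d) * n powr (2 - 1 / real d)"
  shows "ng * (e / ng) ^ d / ng ^ d \<ge> C ^ d * t"
proof -
  have n: "n > 0" using nng ng by linarith
  have h1: "(t powr (1 / real d)) ^ d = t"
  proof -
    have "(t powr (1 / real d)) ^ d = t powr (real d * (1 / real d))" using t by (simp add: powr_power)
    also have "real d * (1 / real d) = 1" using d by simp
    finally show ?thesis using t by simp
  qed
  have h2: "(n powr (2 - 1 / real d)) ^ d = n ^ (2 * d - 1)"
  proof -
    have "(n powr (2 - 1 / real d)) ^ d = n powr (real d * (2 - 1 / real d))" using n by (simp add: powr_power)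
    also have "real d * (2 - 1 / real d) = real (2 * d - 1)" using d by (simp add: of_nat_diff field_simps)
    finally show ?thesis using n by (simp add: powr_realpow)
  qed
  have e0: "C * t powr (1 / real d) * n powr (2 - 1 / real d) \<ge> 0" using C by simp
  have "e ^ d \<ge> (C * t powr (1 / real d) * n powr (2 - 1 / real d)) ^ d"
    by (rule power_mono[OF e e0])
  also have "(C * t powr (1 / real d) * n powr (2 - 1 / real d)) ^ d = C ^ d * t * n ^ (2 * d - 1)"
    by (simp add: power_mult_distrib h1 h2)
  finally have ed: "e ^ d \<ge> C ^ d * t * n ^ (2 * d - 1)" .
  have nn: "n ^ (2 * d - 1) \<ge> ng ^ (2 * d - 1)" by (rule power_mono[OF nng]) (use ng in simp)
  have ngp: "ng ^ (2 * d - 1) > 0" using ng by simp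
  have eq: "ng * (e / ng) ^ d / ng ^ d = e ^ d / ng ^ (2 * d - 1)"
  proof -
    have "ng ^ d * ng ^ d = ng * ng ^ (2 * d - 1)"
    proof -
      have "d + d = Suc (2 * d - 1)" using d by simp
      then show ?thesis by (metis power_add power_Suc)
    qed
    then show ?thesis using ng by (simp add: power_divide field_simps)
  qed
  have "C ^ d * t * ng ^ (2 * d - 1) \<le> C ^ d * t * n ^ (2 * d - 1)"
    by (rule mult_left_mono[OF nn]) (use C t in simp)
  then have "C ^ d * t * ng ^ (2 * d - 1) \<le> e ^ d" using ed by linarith
  then have "C ^ d * t \<le> e ^ d / ng ^ (2 * d - 1)" using ngp by (simp add: field_simps)
  then show ?thesis using eq by simp
qed

definition RPr :: "real \<Rightarrow> 'x set \<Rightarrow> real \<Rightarrow> 'a set \<Rightarrow> ('a \<Rightarrow> 'a \<Rightarrow> bool) \<Rightarrow> real \<Rightarrow> ('x \<Rightarrow> 'a set) \<Rightarrow> bool" where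
  "RPr c X M V E t W \<longleftrightarrow> (simple_graph V E \<longrightarrow> sparse c t V E \<longrightarrow> t \<ge> 1 \<longrightarrow>
     (\<forall>x\<in>X. W x \<subseteq> V \<and> real (card (W x)) \<ge> M * t) \<longrightarrow>
     (\<exists>p. (\<forall>x\<in>X. p x \<in> W x) \<and> inj_on p X \<and> (\<forall>x\<in>X. \<forall>x'\<in>X. \<not> E (p x) (p x'))))"

lemma rainbow': "finite X \<Longrightarrow> c > 0 \<Longrightarrow> \<exists>M>0. \<forall>V E t W. RPr c X M V E t W"
  unfolding RPr_def by (rule rainbow)

definition SBr :: "real \<Rightarrow> real \<Rightarrow> real \<Rightarrow> 'z set \<Rightarrow> 'a set \<Rightarrow> ('a \<Rightarrow> 'a \<Rightarrow> bool) \<Rightarrow> real \<Rightarrow> 'a set \<Rightarrow> 'a set \<Rightarrow> bool" where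
  "SBr c K0 K Z V E t W U \<longleftrightarrow> (simple_graph V E \<longrightarrow> sparse c t V E \<longrightarrow> t \<ge> 1 \<longrightarrow> W \<subseteq> V \<longrightarrow> U \<subseteq> V \<longrightarrow>
       real (card W) \<ge> K * t \<longrightarrow>
       real (card (badg Z U W E (K0 * t))) \<le> real (card Z) * t * real (card U) ^ (card Z - 1))"

lemma seq_bad': "c > 0 \<Longrightarrow> K0 \<ge> 0 \<Longrightarrow> \<exists>K\<ge>K0. \<forall>Z. finite Z \<longrightarrow> card Z \<le> m \<longrightarrow> (\<forall>V E t W U. SBr c K0 K Z V E t W U)"
  unfolding SBr_def by (rule seq_bad)

definition ICr :: "real \<Rightarrow> 'b set \<Rightarrow> real \<Rightarrow> real \<Rightarrow> 'a set \<Rightarrow> ('a \<Rightarrow> 'a \<Rightarrow> bool) \<Rightarrow> real \<Rightarrow> 'a set \<Rightarrow> bool" where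
  "ICr c Y L \<delta> V E t W \<longleftrightarrow> (simple_graph V E \<longrightarrow> sparse c t V E \<longrightarrow> t \<ge> 1 \<longrightarrow>
     W \<subseteq> V \<longrightarrow> real (card W) \<ge> L * t \<longrightarrow>
     real (card (indep_maps Y W E)) \<ge> \<delta> * real (card W) ^ card Y)"

lemma indep_count': "finite Y \<Longrightarrow> c > 0 \<Longrightarrow> \<exists>L>0. \<exists>\<delta>>0. \<forall>V E t W. ICr c Y L \<delta> V E t W"
  unfolding ICr_def by (rule indep_count)

theorem corollary1p3:
  fixes d :: nat and VH :: "'b set" and EH :: "'b \<Rightarrow> 'b \<Rightarrow> bool" and c :: real
  assumes "d > 0"
    and "simple_graph VH EH"
    and "bipartite_one_side_deg VH EH d"
    and "c > 0"
  shows "\<exists>C>0. \<forall>(t::real) (V::nat set) E VG EG.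
           t > 0 \<longrightarrow> simple_graph V E \<longrightarrow> sparse c t V E \<longrightarrow> subgraph VG EG V E \<longrightarrow>
           real (num_edges VG EG) \<ge> C * t powr (1 / real d) * real (card V) powr (2 - 1 / real d) \<longrightarrow>
           card V > 0 \<longrightarrow>
           (\<exists>phi. induced_copy VH EH VG EG E phi)"
proof -
  obtain X Y where XY: "X \<union> Y = VH" "X \<inter> Y = {}"
    and cross: "\<forall>u v. EH u v \<longrightarrow> (u \<in> X \<and> v \<in> Y) \<or> (u \<in> Y \<and> v \<in> X)"
    and degX: "\<forall>x\<in>X. degree VH EH x \<le> d"
    using assms(3) unfolding bipartite_one_side_deg_def by blast
  have fVH: "finite VH" and EHin: "\<And>u v. EH u v \<Longrightarrow> u \<in> VH \<and> v \<in> VH"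
    and EHsym: "\<And>u v. EH u v \<Longrightarrow> EH v u"
    using assms(2) unfolding simple_graph_def by auto
  have fX: "finite X" and fY: "finite Y" using fVH XY(1) finite_subset by auto
  define Nx where "Nx = (\<lambda>x. {y\<in>VH. EH x y})"
  have NxY: "Nx x \<subseteq> Y" if "x \<in> X" for x
  proof
    fix y assume "y \<in> Nx x"
    then have "EH x y" unfolding Nx_def by simp
    then show "y \<in> Y" using cross that XY(2) by blast
  qed
  have Nxf: "finite (Nx x)" for x unfolding Nx_def using fVH by simp
  have Nxd: "card (Nx x) \<le> d" if "x \<in> X" for x using degX that unfolding degree_def Nx_def by simp
  define a where "a = card X"
  define b where "b = card Y"
  from rainbow'[OF fX assms(4)] obtain M where Mpos: "M > 0" and Mprop0: "\<forall>(V::nat set) E t W. RPr c X M V E t W"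
    by blast
  have "\<exists>K\<ge>M. \<forall>(Z::'b set). finite Z \<longrightarrow> card Z \<le> b \<longrightarrow> (\<forall>(V::nat set) E t W U. SBr c M K Z V E t W U)"
    by (rule seq_bad'[OF assms(4) less_imp_le[OF Mpos]])
  then obtain K where KM: "K \<ge> M"
    and Kprop0: "\<forall>(Z::'b set). finite Z \<longrightarrow> card Z \<le> b \<longrightarrow> (\<forall>(V::nat set) E t W U. SBr c M K Z V E t W U)"
    by blast
  from indep_count'[OF fY assms(4)] obtain L1 \<delta> where L1pos: "L1 > 0" and dpos: "\<delta> > 0"
    and Lprop0: "\<forall>(V::nat set) E t W. ICr c Y L1 \<delta> V E t W"
    by blast
  define \<epsilon> where "\<epsilon> = \<delta> / (2 * (real a + 1))"
  define L where "L = max L1 (max 1 (2 * (real a + 1) * real b / \<delta>))"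
  define C where "C = real a / \<epsilon> * K ^ d + L ^ d + 1"
  have epos: "\<epsilon> > 0" unfolding \<epsilon>_def using dpos by simp
  have Kpos: "K > 0" using KM Mpos by linarith
  have LL1: "L \<ge> L1" and L1': "L \<ge> 1" and Lb: "L \<ge> 2 * (real a + 1) * real b / \<delta>" unfolding L_def by auto
  have Lpos: "L > 0" using L1' by linarith
  have C1: "C \<ge> 1" unfolding C_def using epos Kpos Lpos by simp
  show ?thesis
  proof (rule exI[of _ C], intro conjI allI impI)
    show "C > 0" using C1 by linarith
  next
    fix t :: real and V :: "nat set" and E VG EG
    assume tpos: "t > 0" and sg: "simple_graph V E" and sp: "sparse c t V E" and sub: "subgraph VG EG V E"
      and ebig: "real (num_edges VG EG) \<ge> C * t powr (1 / real d) * real (card V) powr (2 - 1 / real d)"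
      and npos: "card V > 0"
    have fV: "finite V" and Esym: "\<And>u v. E u v \<Longrightarrow> E v u" and Eirr: "\<And>u. \<not> E u u"
      using sg unfolding simple_graph_def by auto
    have sgG: "simple_graph VG EG" and VGV: "VG \<subseteq> V" and EGE: "\<And>u v. EG u v \<Longrightarrow> E u v"
      using sub unfolding subgraph_def by auto
    have fVG: "finite VG" and EGin: "\<And>u v. EG u v \<Longrightarrow> u \<in> VG \<and> v \<in> VG"
      and EGsym: "\<And>u v. EG u v \<Longrightarrow> EG v u" and EGirr: "\<And>u. \<not> EG u u"
      using sgG unfolding simple_graph_def by auto
    have "C * t powr (1 / real d) * real (card V) powr (2 - 1 / real d) > 0" using C1 tpos npos by simp
    then have "num_edges VG EG > 0" using ebig by linarith
    then have "{{u, v} | u v. u \<in> VG \<and> v \<in> VG \<and> EG u v} \<noteq> {}" unfolding num_edges_def by (metis card.empty less_irrefl)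
    then obtain u0 v0 where uv0: "u0 \<in> VG" "v0 \<in> VG" "EG u0 v0" by blast
    have t1: "t \<ge> 1"
    proof (rule ccontr)
      assume "\<not> t \<ge> 1"
      then have c1: "real (card {u0}) \<ge> t" "real (card {v0}) \<ge> t" by auto
      have c2: "{u0} \<subseteq> V" "{v0} \<subseteq> V" using uv0 VGV by auto
      have "real (e_pairs E {u0} {v0}) \<le> (1 - c) * real (card {u0}) * real (card {v0})"
        using sp c1 c2 unfolding sparse_def by blast
      moreover have "{(a, b). a \<in> {u0} \<and> b \<in> {v0} \<and> E a b} = {(u0, v0)}" using EGE[OF uv0(3)] by auto
      ultimately show False using assms(4) unfolding e_pairs_def by simp
    qed
    have ngpos: "card VG > 0" using uv0 fVG card_gt_0_iff by blast
    have VGne: "VG \<noteq> {}" using uv0 by auto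
    have nng: "real (card V) \<ge> real (card VG)" using card_mono[OF fV VGV] by simp
    have eb: "real (card VG) * (real (num_edges VG EG) / real (card VG)) ^ d / real (card VG) ^ d \<ge> C ^ d * t"
      by (rule edge_bound[OF assms(1) _ tpos nng _ ebig]) (use C1 ngpos in auto)
    define A where "A = (C ^ d * t) ^ d"
    have low: "real (\<Sum>T\<in>{..<d} \<rightarrow>\<^sub>E VG. card (cn VG EG (T ` {..<d})) ^ d) \<ge> real (card VG) ^ d * A"
    proof -
      have "A \<le> (real (card VG) * (real (num_edges VG EG) / real (card VG)) ^ d / real (card VG) ^ d) ^ d"
        unfolding A_def by (rule power_mono[OF eb]) (use C1 tpos in simp)
      then have "real (card VG) ^ d * A \<le> real (card VG) ^ d * (real (card VG) * (real (num_edges VG EG) / real (card VG)) ^ d / real (card VG) ^ d) ^ d"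
        by (rule mult_left_mono) simp
      then show ?thesis using drc_lower[where EG=EG, OF fVG VGne EGsym assms(1)] by linarith
    qed
    have Abig: "A > real (card X) / \<epsilon> * (K * t) ^ d + (L * t) ^ d"
    proof -
      have Cd1: "C \<le> C ^ d" using power_increasing[of 1 d C] assms(1) C1 by simp
      have "1 \<le> C ^ d" using C1 by simp
      then have "C ^ d \<le> (C ^ d) ^ d" using power_increasing[of 1 d "C ^ d"] assms(1) by simp
      then have Cd: "C \<le> (C ^ d) ^ d" using Cd1 by linarith
      have tdpos: "t ^ d > 0" using tpos by simp
      have "real (card X) / \<epsilon> * (K * t) ^ d + (L * t) ^ d = (real a / \<epsilon> * K ^ d + L ^ d) * t ^ d"
        unfolding a_def by (simp add: power_mult_distrib algebra_simps)
      also have "\<dots> < C * t ^ d" using tdpos unfolding C_def by (simp add: algebra_simps)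
      also have "\<dots> \<le> (C ^ d) ^ d * t ^ d" using Cd tdpos by (intro mult_right_mono) auto
      also have "\<dots> = A" unfolding A_def by (simp add: power_mult_distrib)
      finally show ?thesis .
    qed
    have Sx: "\<forall>x\<in>X. finite (Nx x) \<and> card (Nx x) \<le> d" using Nxf Nxd by blast
    have r0: "K * t \<ge> 0" and lt0: "L * t \<ge> 0" using Kpos Lpos tpos by auto
    have "\<exists>T\<in>{..<d} \<rightarrow>\<^sub>E VG. (L * t) ^ d < real (card (cn VG EG (T ` {..<d}))) ^ d \<and>
     (\<forall>x\<in>X. real (card {h \<in> Nx x \<rightarrow>\<^sub>E cn VG EG (T ` {..<d}). real (card (cn VG EG (h ` Nx x))) < K * t})
        < \<epsilon> * real (card (cn VG EG (T ` {..<d}))) ^ card (Nx x))"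
      by (rule drc_choose[where EG=EG, OF fVG ngpos EGsym fX Sx epos r0 lt0 low Abig])
    then obtain T where TD: "T \<in> {..<d} \<rightarrow>\<^sub>E VG"
      and uLt: "(L * t) ^ d < real (card (cn VG EG (T ` {..<d}))) ^ d"
      and badx: "\<forall>x\<in>X. real (card {h \<in> Nx x \<rightarrow>\<^sub>E cn VG EG (T ` {..<d}). real (card (cn VG EG (h ` Nx x))) < K * t})
        < \<epsilon> * real (card (cn VG EG (T ` {..<d}))) ^ card (Nx x)"
      by blast
    define U where "U = cn VG EG (T ` {..<d})"
    define u where "u = real (card U)"
    have UVG: "U \<subseteq> VG" unfolding U_def cn_def by auto
    have UV: "U \<subseteq> V" using UVG VGV by auto
    have fU: "finite U" using fVG UVG finite_subset by auto
    have uLt': "L * t < u" unfolding u_def U_def by (rule power_less_imp_less_base[OF uLt]) simp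
    have upos: "u > 0" using uLt' Lpos tpos by (meson less_trans mult_pos_pos)
    have tu: "t \<le> u / L" using uLt' Lpos by (simp add: field_simps)
    have ind: "real (card (indep_maps Y U E)) \<ge> \<delta> * u ^ b"
    proof -
      have "ICr c Y L1 \<delta> V E t U" using Lprop0 by blast
      moreover have "real (card U) \<ge> L1 * t"
      proof -
        have "L1 * t \<le> L * t" using LL1 tpos by (intro mult_right_mono) auto
        then show ?thesis using uLt' unfolding u_def by linarith
      qed
      ultimately show ?thesis using sg sp t1 UV unfolding ICr_def u_def b_def by blast
    qed
    define Vb where "Vb = (\<lambda>x. {f \<in> Y \<rightarrow>\<^sub>E U. real (card (cn VG EG (f ` Nx x))) < K * t})"
    define Vc where "Vc = (\<lambda>x. {f \<in> Y \<rightarrow>\<^sub>E U. \<not> real (card (cn VG EG (f ` Nx x))) < K * t \<and>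
        real (card (cn VG EG (f ` Nx x) - (\<Union>z\<in>Y - Nx x. nb E (f z)))) < M * t})"
    define \<beta> where "\<beta> = \<delta> * u ^ b / (2 * (real a + 1))"
    have Vb_bound: "real (card (Vb x)) < \<beta>" if x: "x \<in> X" for x
    proof -
      define S where "S = Nx x"
      define Z where "Z = Y - S"
      define poor where "poor = (\<lambda>h. real (card (cn VG EG (h ` S))) < K * t)"
      have SY: "S \<subseteq> Y" unfolding S_def using NxY[OF x] .
      have fS: "finite S" unfolding S_def by (rule Nxf)
      have fZ: "finite Z" unfolding Z_def using fY by simp
      have cZ: "card Z = b - card S" unfolding Z_def b_def by (rule card_Diff_subset[OF fS SY])
      have kb: "card S \<le> b" unfolding b_def by (rule card_mono[OF fY SY])
      have fA: "finite (S \<rightarrow>\<^sub>E U)" by (rule finite_PiE[OF fS]) (use fU in simp)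
      have "card (Vb x) \<le> (\<Sum>h\<in>S \<rightarrow>\<^sub>E U. card {g \<in> (Y - S) \<rightarrow>\<^sub>E U. poor h})"
        unfolding Vb_def S_def by (rule split_count[OF fY NxY[OF x] fU]) (simp add: poor_def S_def)
      also have "\<dots> = (\<Sum>h\<in>S \<rightarrow>\<^sub>E U. if poor h then card (Z \<rightarrow>\<^sub>E U) else 0)"
        unfolding Z_def by (rule sum.cong) auto
      also have "\<dots> = (\<Sum>h\<in>{h \<in> S \<rightarrow>\<^sub>E U. poor h}. card (Z \<rightarrow>\<^sub>E U))"
        by (rule sum.inter_filter[OF fA, symmetric])
      also have "\<dots> = card {h \<in> S \<rightarrow>\<^sub>E U. poor h} * card U ^ (b - card S)"
        using fZ cZ by (simp add: card_PiE)
      finally have c1: "real (card (Vb x)) \<le> real (card {h \<in> S \<rightarrow>\<^sub>E U. poor h}) * u ^ (b - card S)"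
        unfolding u_def by (metis of_nat_le_iff of_nat_mult of_nat_power)
      have c2: "real (card {h \<in> S \<rightarrow>\<^sub>E U. poor h}) < \<epsilon> * u ^ card S"
        using badx x unfolding poor_def S_def U_def u_def by blast
      have upow: "u ^ (b - card S) > 0" using upos by simp
      have "real (card {h \<in> S \<rightarrow>\<^sub>E U. poor h}) * u ^ (b - card S) < \<epsilon> * u ^ card S * u ^ (b - card S)"
        by (rule mult_strict_right_mono[OF c2 upow])
      also have "\<dots> = \<epsilon> * u ^ b"
      proof -
        have "card S + (b - card S) = b" using kb by simp
        then have "u ^ card S * u ^ (b - card S) = u ^ b" by (metis power_add)
        then show ?thesis by (simp add: mult.assoc)
      qed
      also have "\<dots> = \<beta>" unfolding \<beta>_def \<epsilon>_def by simp
      finally show ?thesis using c1 by linarith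
    qed
    have Vc_bound: "real (card (Vc x)) \<le> \<beta>" if x: "x \<in> X" for x
    proof -
      define S where "S = Nx x"
      define Z where "Z = Y - S"
      define poor where "poor = (\<lambda>h. real (card (cn VG EG (h ` S))) < K * t)"
      define Q where "Q = (\<lambda>h g. \<not> poor h \<and> g \<in> badg Z U (cn VG EG (h ` S)) E (M * t))"
      have SY: "S \<subseteq> Y" unfolding S_def using NxY[OF x] .
      have fS: "finite S" unfolding S_def by (rule Nxf)
      have fZ: "finite Z" unfolding Z_def using fY by simp
      have cZ: "card Z = b - card S" unfolding Z_def b_def by (rule card_Diff_subset[OF fS SY])
      have kb: "card S \<le> b" unfolding b_def by (rule card_mono[OF fY SY])
      have cZb: "card Z \<le> b" using cZ by simp
      have fA: "finite (S \<rightarrow>\<^sub>E U)" by (rule finite_PiE[OF fS]) (use fU in simp)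
      have PQ: "Q (restrict f S) (restrict f (Y - S))"
        if f: "f \<in> Y \<rightarrow>\<^sub>E U" and Pf: "\<not> real (card (cn VG EG (f ` Nx x))) < K * t \<and>
        real (card (cn VG EG (f ` Nx x) - (\<Union>z\<in>Y - Nx x. nb E (f z)))) < M * t" for f
      proof -
        have "f \<in> Pi Z (\<lambda>_. U)" using f unfolding Z_def by (auto simp: PiE_iff)
        then have r: "restrict f Z \<in> Z \<rightarrow>\<^sub>E U" by simp
        have un: "(\<Union>z\<in>Z. nb E (restrict f Z z)) = (\<Union>z\<in>Z. nb E (f z))"
          by (rule SUP_cong) simp_all
        show ?thesis unfolding Q_def poor_def badg_def using r un Pf unfolding Z_def S_def by simp
      qed
      have trm: "real (card {g \<in> Z \<rightarrow>\<^sub>E U. Q h g}) \<le> real (card Z) * t * u ^ (card Z - 1)"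
        if h: "h \<in> S \<rightarrow>\<^sub>E U" for h
      proof (cases "poor h")
        case True
        then have "{g \<in> Z \<rightarrow>\<^sub>E U. Q h g} = {}" unfolding Q_def by simp
        then have "real (card {g \<in> Z \<rightarrow>\<^sub>E U. Q h g}) = 0" by (simp only: card.empty of_nat_0)
        moreover have "real (card Z) * t * u ^ (card Z - 1) \<ge> 0" using tpos upos by simp
        ultimately show ?thesis by linarith
      next
        case False
        have sub1: "{g \<in> Z \<rightarrow>\<^sub>E U. Q h g} \<subseteq> badg Z U (cn VG EG (h ` S)) E (M * t)" unfolding Q_def by (rule subsetI) simp
        have fB: "finite (badg Z U (cn VG EG (h ` S)) E (M * t))" by (rule finite_badg[OF fZ fU])
        have "card {g \<in> Z \<rightarrow>\<^sub>E U. Q h g} \<le> card (badg Z U (cn VG EG (h ` S)) E (M * t))"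
          by (rule card_mono[OF fB sub1])
        have sbr: "SBr c M K Z V E t (cn VG EG (h ` S)) U" by (rule Kprop0[rule_format, OF fZ cZb])
        have WV: "cn VG EG (h ` S) \<subseteq> V" using VGV unfolding cn_def by auto
        have Wge: "real (card (cn VG EG (h ` S))) \<ge> K * t" using False unfolding poor_def by simp
        have "real (card (badg Z U (cn VG EG (h ` S)) E (M * t))) \<le> real (card Z) * t * real (card U) ^ (card Z - 1)"
          by (rule sbr[unfolded SBr_def, rule_format, OF sg sp t1 WV UV Wge])
        moreover have "real (card {g \<in> Z \<rightarrow>\<^sub>E U. Q h g}) \<le> real (card (badg Z U (cn VG EG (h ` S)) E (M * t)))"
          using \<open>card {g \<in> Z \<rightarrow>\<^sub>E U. Q h g} \<le> card (badg Z U (cn VG EG (h ` S)) E (M * t))\<close> by simp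
        ultimately show ?thesis unfolding u_def by linarith
      qed
      have "card (Vc x) \<le> (\<Sum>h\<in>S \<rightarrow>\<^sub>E U. card {g \<in> (Y - S) \<rightarrow>\<^sub>E U. Q h g})"
        unfolding Vc_def S_def by (rule split_count[OF fY NxY[OF x] fU]) (use PQ in \<open>simp add: S_def\<close>)
      then have "real (card (Vc x)) \<le> real (\<Sum>h\<in>S \<rightarrow>\<^sub>E U. card {g \<in> Z \<rightarrow>\<^sub>E U. Q h g})"
        unfolding Z_def by (simp only: of_nat_le_iff)
      also have "\<dots> = (\<Sum>h\<in>S \<rightarrow>\<^sub>E U. real (card {g \<in> Z \<rightarrow>\<^sub>E U. Q h g}))" by (simp only: of_nat_sum)
      also have "\<dots> \<le> (\<Sum>h\<in>S \<rightarrow>\<^sub>E U. real (card Z) * t * u ^ (card Z - 1))"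
        by (rule sum_mono) (rule trm)
      also have "\<dots> = u ^ card S * (real (card Z) * t * u ^ (card Z - 1))"
        using fS by (simp add: card_PiE u_def)
      finally have c1: "real (card (Vc x)) \<le> u ^ card S * (real (card Z) * t * u ^ (card Z - 1))" .
      have "real (card (Vc x)) * u \<le> u ^ card S * (real (card Z) * t * u ^ (card Z - 1)) * u"
        by (rule mult_right_mono[OF c1]) (use upos in simp)
      also have "\<dots> = t * u ^ card S * (real (card Z) * u ^ (card Z - 1) * u)" by (simp add: mult_ac)
      also have "\<dots> = t * u ^ card S * (real (card Z) * u ^ card Z)" by (simp only: pow_pred)
      also have "\<dots> = real (card Z) * t * u ^ b"
      proof -
        have "card S + card Z = b" using cZ kb by simp
        then have e: "u ^ card S * u ^ card Z = u ^ b" using power_add[of u "card S" "card Z"] by simp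
        have "t * u ^ card S * (real (card Z) * u ^ card Z) = real (card Z) * t * (u ^ card S * u ^ card Z)"
          by (simp add: mult_ac)
        then show ?thesis by (simp only: e)
      qed
      also have "\<dots> \<le> real b * (u / L) * u ^ b"
      proof -
        have "real (card Z) * t \<le> real b * (u / L)" using cZb tu tpos by (intro mult_mono) auto
        then show ?thesis by (rule mult_right_mono) (use upos in simp)
      qed
      finally have c2: "real (card (Vc x)) * u \<le> real b * (u / L) * u ^ b" .
      have "real (card (Vc x)) \<le> real b / L * u ^ b"
      proof -
        have "real b * (u / L) * u ^ b = (real b / L * u ^ b) * u" by (simp add: field_simps)
        then have "real (card (Vc x)) * u \<le> (real b / L * u ^ b) * u" using c2 by (simp add: mult_ac)
        then show ?thesis using upos by (rule mult_right_le_imp_le)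
      qed
      also have "\<dots> \<le> \<beta>"
      proof -
        have "real b / L \<le> \<delta> / (2 * (real a + 1))"
        proof -
          have "2 * (real a + 1) * real b / \<delta> \<le> L" using Lb .
          then have "2 * (real a + 1) * real b \<le> L * \<delta>" using dpos by (simp add: field_simps)
          then show ?thesis using Lpos dpos by (simp add: field_simps)
        qed
        then have "real b / L * u ^ b \<le> \<delta> / (2 * (real a + 1)) * u ^ b"
          by (rule mult_right_mono) (use upos in simp)
        then show ?thesis unfolding \<beta>_def by simp
      qed
      finally show ?thesis .
    qed
    define Bad where "Bad = (\<Union>x\<in>X. Vb x \<union> Vc x)"
    have fPY: "finite (Y \<rightarrow>\<^sub>E U)" by (rule finite_PiE[OF fY]) (use fU in simp)
    have fVb: "finite (Vb x)" for x unfolding Vb_def by (rule finite_subset[OF _ fPY]) blast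
    have fVc: "finite (Vc x)" for x unfolding Vc_def by (rule finite_subset[OF _ fPY]) blast
    have fBad: "finite Bad" unfolding Bad_def using fX fVb fVc by blast
    have "card Bad \<le> (\<Sum>x\<in>X. card (Vb x \<union> Vc x))" unfolding Bad_def by (rule card_UN_le[OF fX])
    also have "\<dots> \<le> (\<Sum>x\<in>X. card (Vb x) + card (Vc x))" by (rule sum_mono) (rule card_Un_le)
    finally have "real (card Bad) \<le> real (\<Sum>x\<in>X. card (Vb x) + card (Vc x))" by (simp only: of_nat_le_iff)
    also have "\<dots> = (\<Sum>x\<in>X. real (card (Vb x)) + real (card (Vc x)))" by simp
    also have "\<dots> \<le> (\<Sum>x\<in>X. 2 * \<beta>)"
    proof (rule sum_mono)
      fix x assume "x \<in> X"
      then show "real (card (Vb x)) + real (card (Vc x)) \<le> 2 * \<beta>" using Vb_bound Vc_bound by fastforce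
    qed
    also have "\<dots> = real a * (2 * \<beta>)" unfolding a_def by simp
    also have "\<dots> < \<delta> * u ^ b"
    proof -
      have "real a * (2 * \<beta>) = \<delta> * u ^ b * (real a / (real a + 1))" unfolding \<beta>_def by (simp add: field_simps)
      also have "\<dots> < \<delta> * u ^ b * 1"
        by (rule mult_strict_left_mono) (use dpos upos in simp_all)
      finally show ?thesis by simp
    qed
    finally have "real (card Bad) < real (card (indep_maps Y U E))" using ind by linarith
    then have "\<not> indep_maps Y U E \<subseteq> Bad" using card_mono[OF fBad] by (meson not_le of_nat_le_iff)
    then obtain f where fI: "f \<in> indep_maps Y U E" and fB: "f \<notin> Bad" by blast
    have fP: "f \<in> Y \<rightarrow>\<^sub>E U" and finj: "inj_on f Y" and find: "\<forall>y\<in>Y. \<forall>y'\<in>Y. \<not> E (f y) (f y')"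
      using fI unfolding indep_maps_def by blast+
    define W where "W = (\<lambda>x. cn VG EG (f ` Nx x) - (\<Union>z\<in>Y - Nx x. nb E (f z)))"
    have Wok: "\<forall>x\<in>X. W x \<subseteq> V \<and> real (card (W x)) \<ge> M * t"
    proof
      fix x assume x: "x \<in> X"
      have "f \<notin> Vb x" "f \<notin> Vc x" using fB x unfolding Bad_def by blast+
      then have "real (card (W x)) \<ge> M * t" using fP unfolding Vb_def Vc_def W_def by auto
      moreover have "W x \<subseteq> V" unfolding W_def cn_def using VGV by auto
      ultimately show "W x \<subseteq> V \<and> real (card (W x)) \<ge> M * t" by simp
    qed
    have "RPr c X M V E t W" using Mprop0 by blast
    then have "\<exists>p. (\<forall>x\<in>X. p x \<in> W x) \<and> inj_on p X \<and> (\<forall>x\<in>X. \<forall>x'\<in>X. \<not> E (p x) (p x'))"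
      unfolding RPr_def using sg sp t1 Wok by blast
    then obtain p where pW: "\<forall>x\<in>X. p x \<in> W x" and pinj: "inj_on p X" and pind: "\<forall>x\<in>X. \<forall>x'\<in>X. \<not> E (p x) (p x')"
      by blast
    have pVG: "p x \<in> VG" if "x \<in> X" for x using pW that unfolding W_def cn_def by blast
    have pN: "EG (f y) (p x)" if "x \<in> X" "y \<in> Nx x" for x y using pW that unfolding W_def cn_def by blast
    have pZ: "\<not> E (f z) (p x) \<and> p x \<noteq> f z" if "x \<in> X" "z \<in> Y" "z \<notin> Nx x" for x z
    proof -
      have "p x \<notin> nb E (f z)" using pW that unfolding W_def by blast
      then show ?thesis unfolding nb_def by blast
    qed
    have fVG: "f y \<in> VG" if "y \<in> Y" for y using PiE_mem[OF fP that] UVG by blast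
    define phi where "phi = (\<lambda>v. if v \<in> X then p v else f v)"
    have phiX: "phi x = p x" if "x \<in> X" for x using that unfolding phi_def by simp
    have phiY: "phi y = f y" if "y \<in> Y" for y using that XY(2) unfolding phi_def by auto
    have VHc: "v \<in> X \<or> v \<in> Y" if "v \<in> VH" for v using that XY(1) by blast
    have NxI: "y \<in> Nx x" if "EH x y" for x y using that EHin unfolding Nx_def by blast
    have pf_ne: "p x \<noteq> f y" if "x \<in> X" "y \<in> Y" for x y
    proof (cases "y \<in> Nx x")
      case True
      then have "EG (f y) (p x)" using pN that by blast
      then show ?thesis using EGirr by metis
    next
      case False
      then show ?thesis using pZ that by blast
    qed
    show "\<exists>phi. induced_copy VH EH VG EG E phi"
    proof (rule exI[of _ phi])
      show "induced_copy VH EH VG EG E phi" unfolding induced_copy_def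
      proof (intro conjI)
        show "inj_on phi VH"
        proof (rule inj_onI)
          fix v w assume v: "v \<in> VH" and w: "w \<in> VH" and eq: "phi v = phi w"
          show "v = w"
          proof (cases "v \<in> X")
            case vX: True
            show ?thesis
            proof (cases "w \<in> X")
              case True then show ?thesis using vX eq pinj phiX unfolding inj_on_def by metis
            next
              case False
              then have "w \<in> Y" using VHc w by blast
              then show ?thesis using vX eq phiX phiY pf_ne by metis
            qed
          next
            case vY0: False
            then have vY: "v \<in> Y" using VHc v by blast
            show ?thesis
            proof (cases "w \<in> X")
              case True then show ?thesis using vY eq phiX phiY pf_ne by metis
            next
              case False
              then have "w \<in> Y" using VHc w by blast
              then show ?thesis using vY eq finj phiY unfolding inj_on_def by metis
            qed
          qed
        qed
        show "phi ` VH \<subseteq> VG"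
        proof
          fix z assume "z \<in> phi ` VH"
          then obtain v where v: "v \<in> VH" and z: "z = phi v" by blast
          show "z \<in> VG"
          proof (cases "v \<in> X")
            case True then show ?thesis using z phiX pVG by simp
          next
            case False
            then have "v \<in> Y" using VHc v by blast
            then show ?thesis using z phiY fVG by simp
          qed
        qed
        show "\<forall>v\<in>VH. \<forall>w\<in>VH. EH v w \<longrightarrow> EG (phi v) (phi w)"
        proof (intro ballI impI)
          fix v w assume v: "v \<in> VH" and w: "w \<in> VH" and e: "EH v w"
          have "(v \<in> X \<and> w \<in> Y) \<or> (v \<in> Y \<and> w \<in> X)" using cross e by blast
          then show "EG (phi v) (phi w)"
          proof
            assume vw: "v \<in> X \<and> w \<in> Y"
            have "EG (f w) (p v)" using pN vw NxI[OF e] by blast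
            then show ?thesis using vw phiX phiY EGsym by simp
          next
            assume vw: "v \<in> Y \<and> w \<in> X"
            have "EG (f v) (p w)" using pN vw NxI[OF EHsym[OF e]] by blast
            then show ?thesis using vw phiX phiY by simp
          qed
        qed
        show "\<forall>v\<in>VH. \<forall>w\<in>VH. E (phi v) (phi w) \<longrightarrow> EH v w"
        proof (intro ballI impI)
          fix v w assume v: "v \<in> VH" and w: "w \<in> VH" and e: "E (phi v) (phi w)"
          show "EH v w"
          proof (cases "v \<in> X")
            case vX: True
            show ?thesis
            proof (cases "w \<in> X")
              case True then show ?thesis using vX e phiX pind by metis
            next
              case False
              then have wY: "w \<in> Y" using VHc w by blast
              have e2: "E (p v) (f w)" using e vX wY phiX phiY by simp
              show ?thesis
              proof (cases "w \<in> Nx v")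
                case True then show ?thesis unfolding Nx_def by simp
              next
                case False
                then have "\<not> E (f w) (p v)" using pZ vX wY by blast
                then show ?thesis using e2 Esym by blast
              qed
            qed
          next
            case vY0: False
            then have vY: "v \<in> Y" using VHc v by blast
            show ?thesis
            proof (cases "w \<in> X")
              case wX: True
              have e2: "E (f v) (p w)" using e vY wX phiX phiY by simp
              show ?thesis
              proof (cases "v \<in> Nx w")
                case True then show ?thesis unfolding Nx_def using EHsym by simp
              next
                case False
                then have "\<not> E (f v) (p w)" using pZ vY wX by blast
                then show ?thesis using e2 by blast
              qed
            next
              case False
              then have "w \<in> Y" using VHc w by blast
              then show ?thesis using vY e phiY find by metis
            qed
          qed
        qed
      qed
    qed
  qed
qed

end
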